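(* Let $\mathcal{C}$ be an essentially small symmetric monoidal category with images, which is concrete with concrete images. Suppose $F\in\mathsf{Pmod}(\mathcal{C})$ is $S=\{s_1<\cdots<s_n\}$-constructible and let $\rho=\frac14\min_{1<i\le n}(s_i-s_{i-1})$. Then for any $G\in\mathsf{Pmod}(\mathcal{C})$ with $\varepsilon=d_I(F,G)<\rho$, there is a morphism $\nabla^\varepsilon(F_A)\to G_A$ in $\mathsf{PDgm}(A(\mathcal{C}))$.
   Context: $(\mathcal{C},\Box)$ is an essentially small symmetric monoidal category with unit object $e$. "With images": every morphism $f:a\to b$ factors as $f=h\circ g$ with $h:z\to b$ a monomorphism, universally among such factorizations; $\operatorname{im} f$ denotes $z$. "Concrete with concrete images": $\mathcal{C}$ embeds into $\mathsf{Set}$ and the image of a morphism corresponds to the set-theoretic image. A persistence module is a functor $F:(\mathbb{R},\le)\to\mathcal{C}$. For finite $S=\{s_1<\dots<s_n\}$, $F$ is $S$-constructible if $F(p\le q)$ is the identity on $e$ for $p\le q<s_1$, an isomorphism for $s_i\le p\le q<s_{i+1}$, and an isomorphism for $s_n\le p\le q$. $\mathsf{Pmod}(\mathcal{C})$ is the category of constructible persistence modules (constructible w.r.t. some finite $S$) and natural transformations. Interleaving distance: for $\varepsilon\in\mathbb{R}$, $\Delta^\varepsilon(F)=F\circ\mathsf{Shift}^\varepsilon$ where $\mathsf{Shift}^\varepsilon(r)=r+\varepsilon$; for $\varepsilon\ge0$, $\sigma^\varepsilon_F:F\to\Delta^\varepsilon F$ has components $F(r\le r+\varepsilon)$. $F,G$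 are $\varepsilon$-interleaved if there are morphisms $\phi:F\to\Delta^\varepsilon G$, $\psi:G\to\Delta^\varepsilon F$ with $\Delta^\varepsilon(\psi)\circ\phi=\sigma^{2\varepsilon}_F$ and $\Delta^\varepsilon(\phi)\circ\psi=\sigma^{2\varepsilon}_G$. $d_I(F,G)$ is the minimum $\varepsilon\ge0$ for which they are $\varepsilon$-interleaved ($\infty$ if none). $\mathsf{Dgm}$ is the poset of intervals $[q,r)$, $q<r$, and $[q,\infty)$, ordered by containment. $I(\mathcal{C})$ is the commutative monoid of isomorphism classes under $[a]+[b]=[a\Box b]$, $A(\mathcal{C})$ its group completion, with partial order $x\preceq y$ iff $y-x\in I(\mathcal{C})$ (translation invariant). A persistence diagram valued in $A(\mathcal{C})$ is a map $Y:\mathsf{Dgm}\to A(\mathcal{C})$ that is nonzero only on intervals $[t_i,t_j)$, $[t_i,\infty)$ for some finite set $\{t_1<\dots<t_m\}$. $\mathsf{PDgm}(A(\mathcal{C}))$ is the poset of such diagrams where there is a morphism $Y_1\to Y_2$ iff $\sum_{J\supseteq I}Y_1(J)\preceq\sum_{J\supseteq I}Y_2(J)$ for every $I\in\mathsf{Dgm}$ with $Y_1(I)\neq 0$. For $\varepsilon\ge0$, $\mathsf{Grow}^\varepsilon$ sends $[p,q)\mapsto[p-\varepsilon,q+\varepsilon)$, $[p,\infty)\mapsto[p-\varepsilon,\infty)$, and $\nabla^\varepsilon(Y)=Y\circ\mathsf{Grow}^\varepsilon$. Type $A$ diagram: for $F$ $S$-constructible, define $dF_A:\mathsf{Dgm}\to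 A(\mathcal{C})$ by $dF_A([p,s_i))=[\operatorname{im}F(p\le s_i-\delta)]$ for any $\delta>0$ with $\max(p,s_{i-1})\le s_i-\delta$ ($s_0=-\infty$); $dF_A([p,\infty))=[\operatorname{im}F(p\le s')]$ for any $s'>\max(p,s_n)$; $dF_A([p,q))=[\operatorname{im}F(p\le q)]$ for all other intervals (independent of choices). $F_A$ is its Möbius inversion: $F_A([s_i,s_j))=dF_A([s_i,s_j))-dF_A([s_i,s_{j+1}))+dF_A([s_{i-1},s_{j+1}))-dF_A([s_{i-1},s_j))$, $F_A([s_i,\infty))=dF_A([s_i,\infty))-dF_A([s_{i-1},\infty))$ ($s_0$ any value $<s_1$, $s_{n+1}$ any value $>s_n$), and $F_A(I)=0$ otherwise; it satisfies $dF_A(I)=\sum_{J\supseteq I}F_A(J)$. *)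

theory Defs
  imports Complex_Main "HOL-Library.Extended_Real" "HOL-Algebra.FiniteProduct"
begin

text \<open>A (small) category whose objects are all elements of type 'o and whose morphisms
  are all elements of type 'm.  ccomp g f is g after f, meaningful when ccod f = cdom g.\<close>

record ('o, 'm) smcat =
  cdom :: "'m \<Rightarrow> 'o"
  ccod :: "'m \<Rightarrow> 'o"
  ccomp :: "'m \<Rightarrow> 'm \<Rightarrow> 'm"
  cid :: "'o \<Rightarrow> 'm"
  ctens :: "'o \<Rightarrow> 'o \<Rightarrow> 'o"
  ctensm :: "'m \<Rightarrow> 'm \<Rightarrow> 'm"
  cunit :: "'o"
  cassoc :: "'o \<Rightarrow> 'o \<Rightarrow> 'o \<Rightarrow> 'm"
  clunit :: "'o \<Rightarrow> 'm"
  crunit :: "'o \<Rightarrow> 'm"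
  cbraid :: "'o \<Rightarrow> 'o \<Rightarrow> 'm"

definition is_category :: "('o,'m) smcat \<Rightarrow> bool" where
  "is_category C \<longleftrightarrow>
     (\<forall>a. cdom C (cid C a) = a \<and> ccod C (cid C a) = a) \<and>
     (\<forall>f g. ccod C f = cdom C g \<longrightarrow>
        cdom C (ccomp C g f) = cdom C f \<and> ccod C (ccomp C g f) = ccod C g) \<and>
     (\<forall>f. ccomp C f (cid C (cdom C f)) = f \<and> ccomp C (cid C (ccod C f)) f = f) \<and>
     (\<forall>f g h. ccod C f = cdom C g \<longrightarrow> ccod C g = cdom C h \<longrightarrow>
        ccomp C h (ccomp C g f) = ccomp C (ccomp C h g) f)"

definition is_iso :: "('o,'m) smcat \<Rightarrow> 'm \<Rightarrow> bool" where
  "is_iso C f \<longleftrightarrow> (\<exists>g. cdom C g = ccod C f \<and> ccod C g = cdom C f \<and>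
      ccomp C g f = cid C (cdom C f) \<and> ccomp C f g = cid C (ccod C f))"

definition is_mono :: "('o,'m) smcat \<Rightarrow> 'm \<Rightarrow> bool" where
  "is_mono C f \<longleftrightarrow> (\<forall>g h. ccod C g = cdom C f \<longrightarrow> ccod C h = cdom C f \<longrightarrow>
      cdom C g = cdom C h \<longrightarrow> ccomp C f g = ccomp C f h \<longrightarrow> g = h)"

definition iso_obj :: "('o,'m) smcat \<Rightarrow> 'o \<Rightarrow> 'o \<Rightarrow> bool" where
  "iso_obj C a b \<longleftrightarrow> (\<exists>f. cdom C f = a \<and> ccod C f = b \<and> is_iso C f)"

definition is_smc :: "('o,'m) smcat \<Rightarrow> bool" where
  "is_smc C \<longleftrightarrow> is_category C \<and>
     \<comment> \<open>tensor product is a bifunctor\<close>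
     (\<forall>f g. cdom C (ctensm C f g) = ctens C (cdom C f) (cdom C g) \<and>
            ccod C (ctensm C f g) = ctens C (ccod C f) (ccod C g)) \<and>
     (\<forall>a b. ctensm C (cid C a) (cid C b) = cid C (ctens C a b)) \<and>
     (\<forall>f g f' g'. ccod C f = cdom C g \<longrightarrow> ccod C f' = cdom C g' \<longrightarrow>
        ctensm C (ccomp C g f) (ccomp C g' f') = ccomp C (ctensm C g g') (ctensm C f f')) \<and>
     \<comment> \<open>associator, unitors, braiding: natural isomorphisms\<close>
     (\<forall>a b c. cdom C (cassoc C a b c) = ctens C (ctens C a b) c \<and>
              ccod C (cassoc C a b c) = ctens C a (ctens C b c) \<and> is_iso C (cassoc C a b c)) \<and>
     (\<forall>a. cdom C (clunit C a) = ctens C (cunit C) a \<and> ccod C (clunit C a) = a \<and>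
          is_iso C (clunit C a)) \<and>
     (\<forall>a. cdom C (crunit C a) = ctens C a (cunit C) \<and> ccod C (crunit C a) = a \<and>
          is_iso C (crunit C a)) \<and>
     (\<forall>a b. cdom C (cbraid C a b) = ctens C a b \<and> ccod C (cbraid C a b) = ctens C b a \<and>
          is_iso C (cbraid C a b)) \<and>
     (\<forall>f g h. ccomp C (cassoc C (ccod C f) (ccod C g) (ccod C h)) (ctensm C (ctensm C f g) h) =
              ccomp C (ctensm C f (ctensm C g h)) (cassoc C (cdom C f) (cdom C g) (cdom C h))) \<and>
     (\<forall>f. ccomp C (clunit C (ccod C f)) (ctensm C (cid C (cunit C)) f) =
          ccomp C f (clunit C (cdom C f))) \<and>
     (\<forall>f. ccomp C (crunit C (ccod C f)) (ctensm C f (cid C (cunit C))) =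
          ccomp C f (crunit C (cdom C f))) \<and>
     (\<forall>f g. ccomp C (cbraid C (ccod C f) (ccod C g)) (ctensm C f g) =
            ccomp C (ctensm C g f) (cbraid C (cdom C f) (cdom C g))) \<and>
     \<comment> \<open>pentagon\<close>
     (\<forall>a b c d. ccomp C (cassoc C a b (ctens C c d)) (cassoc C (ctens C a b) c d) =
        ccomp C (ctensm C (cid C a) (cassoc C b c d))
          (ccomp C (cassoc C a (ctens C b c) d) (ctensm C (cassoc C a b c) (cid C d)))) \<and>
     \<comment> \<open>triangle\<close>
     (\<forall>a b. ccomp C (ctensm C (cid C a) (clunit C b)) (cassoc C a (cunit C) b) =
            ctensm C (crunit C a) (cid C b)) \<and>
     \<comment> \<open>hexagon\<close>
     (\<forall>a b c. ccomp C (cassoc C b c a) (ccomp C (cbraid C a (ctens C b c)) (cassoc C a b c)) =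
        ccomp C (ctensm C (cid C b) (cbraid C a c))
          (ccomp C (cassoc C b a c) (ctensm C (cbraid C a b) (cid C c)))) \<and>
     \<comment> \<open>symmetry\<close>
     (\<forall>a b. ccomp C (cbraid C b a) (cbraid C a b) = cid C (ctens C a b))"

definition is_image :: "('o,'m) smcat \<Rightarrow> 'm \<Rightarrow> 'm \<Rightarrow> bool" where
  "is_image C f h \<longleftrightarrow> is_mono C h \<and> ccod C h = ccod C f \<and>
     (\<exists>g. cdom C g = cdom C f \<and> ccod C g = cdom C h \<and> ccomp C h g = f) \<and>
     (\<forall>h' g'. is_mono C h' \<and> ccod C h' = ccod C f \<and> cdom C g' = cdom C f \<and>
        ccod C g' = cdom C h' \<and> ccomp C h' g' = f \<longrightarrow>
        (\<exists>k. cdom C k = cdom C h \<and> ccod C k = cdom C h' \<and> ccomp C h' k = h))"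

definition has_images :: "('o,'m) smcat \<Rightarrow> bool" where
  "has_images C \<longleftrightarrow> (\<forall>f. \<exists>h. is_image C f h)"

definition im_obj :: "('o,'m) smcat \<Rightarrow> 'm \<Rightarrow> 'o" where
  "im_obj C f = cdom C (SOME h. is_image C f h)"

text \<open>Concrete with concrete images: a faithful functor (Uo, Um) into Set under which
  images are set-theoretic images.\<close>

definition concrete_images :: "('o,'m) smcat \<Rightarrow> ('o \<Rightarrow> 'x set) \<Rightarrow> ('m \<Rightarrow> 'x \<Rightarrow> 'x) \<Rightarrow> bool" where
  "concrete_images C Uo Um \<longleftrightarrow>
     (\<forall>f. Um f ` Uo (cdom C f) \<subseteq> Uo (ccod C f)) \<and>
     (\<forall>a. \<forall>x\<in>Uo a. Um (cid C a) x = x) \<and>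
     (\<forall>f g. ccod C f = cdom C g \<longrightarrow> (\<forall>x\<in>Uo (cdom C f). Um (ccomp C g f) x = Um g (Um f x))) \<and>
     (\<forall>f g. cdom C f = cdom C g \<longrightarrow> ccod C f = ccod C g \<longrightarrow>
        (\<forall>x\<in>Uo (cdom C f). Um f x = Um g x) \<longrightarrow> f = g) \<and>
     (\<forall>f h. is_image C f h \<longrightarrow> Um h ` Uo (cdom C h) = Um f ` Uo (cdom C f))"

text \<open>A persistence module is given by its transition morphisms F p q (for p \<le> q).\<close>

definition pobj :: "('o,'m) smcat \<Rightarrow> (real \<Rightarrow> real \<Rightarrow> 'm) \<Rightarrow> real \<Rightarrow> 'o" where
  "pobj C F p = cdom C (F p p)"

definition is_pmod :: "('o,'m) smcat \<Rightarrow> (real \<Rightarrow> real \<Rightarrow> 'm) \<Rightarrow> bool" where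
  "is_pmod C F \<longleftrightarrow>
     (\<forall>p. F p p = cid C (pobj C F p)) \<and>
     (\<forall>p q. p \<le> q \<longrightarrow> cdom C (F p q) = pobj C F p \<and> ccod C (F p q) = pobj C F q) \<and>
     (\<forall>p q r. p \<le> q \<longrightarrow> q \<le> r \<longrightarrow> ccomp C (F q r) (F p q) = F p r)"

definition constructible :: "('o,'m) smcat \<Rightarrow> real set \<Rightarrow> (real \<Rightarrow> real \<Rightarrow> 'm) \<Rightarrow> bool" where
  "constructible C S F \<longleftrightarrow> finite S \<and> S \<noteq> {} \<and> is_pmod C F \<and>
     (\<forall>p q. p \<le> q \<longrightarrow> q < Min S \<longrightarrow> F p q = cid C (cunit C)) \<and>
     (\<forall>p q. Min S \<le> p \<longrightarrow> p \<le> q \<longrightarrow> (\<forall>s\<in>S. \<not> (p < s \<and> s \<le> q)) \<longrightarrow> is_iso C (F p q))"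

definition in_Pmod :: "('o,'m) smcat \<Rightarrow> (real \<Rightarrow> real \<Rightarrow> 'm) \<Rightarrow> bool" where
  "in_Pmod C F \<longleftrightarrow> (\<exists>S. constructible C S F)"

definition nat_trans :: "('o,'m) smcat \<Rightarrow> (real \<Rightarrow> real \<Rightarrow> 'm) \<Rightarrow> (real \<Rightarrow> real \<Rightarrow> 'm) \<Rightarrow> (real \<Rightarrow> 'm) \<Rightarrow> bool" where
  "nat_trans C F G \<phi> \<longleftrightarrow>
     (\<forall>r. cdom C (\<phi> r) = pobj C F r \<and> ccod C (\<phi> r) = pobj C G r) \<and>
     (\<forall>p q. p \<le> q \<longrightarrow> ccomp C (G p q) (\<phi> p) = ccomp C (\<phi> q) (F p q))"

definition shiftP :: "real \<Rightarrow> (real \<Rightarrow> real \<Rightarrow> 'm) \<Rightarrow> (real \<Rightarrow> real \<Rightarrow> 'm)" where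
  "shiftP \<epsilon> F = (\<lambda>p q. F (p + \<epsilon>) (q + \<epsilon>))"

definition interleaved :: "('o,'m) smcat \<Rightarrow> real \<Rightarrow> (real \<Rightarrow> real \<Rightarrow> 'm) \<Rightarrow> (real \<Rightarrow> real \<Rightarrow> 'm) \<Rightarrow> bool" where
  "interleaved C \<epsilon> F G \<longleftrightarrow> (\<exists>\<phi> \<psi>.
     nat_trans C F (shiftP \<epsilon> G) \<phi> \<and> nat_trans C G (shiftP \<epsilon> F) \<psi> \<and>
     (\<forall>r. ccomp C (\<psi> (r + \<epsilon>)) (\<phi> r) = F r (r + 2 * \<epsilon>)) \<and>
     (\<forall>r. ccomp C (\<phi> (r + \<epsilon>)) (\<psi> r) = G r (r + 2 * \<epsilon>)))"

definition dI :: "('o,'m) smcat \<Rightarrow> (real \<Rightarrow> real \<Rightarrow> 'm) \<Rightarrow> (real \<Rightarrow> real \<Rightarrow> 'm) \<Rightarrow> ereal" where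
  "dI C F G = Inf {ereal \<epsilon> | \<epsilon>. \<epsilon> \<ge> 0 \<and> interleaved C \<epsilon> F G}"

section \<open>The group completion A(C) of the monoid of isomorphism classes\<close>

text \<open>Elements are classes of formal differences (a, b) meaning [a] - [b].\<close>

definition Gcls :: "('o,'m) smcat \<Rightarrow> 'o \<times> 'o \<Rightarrow> ('o \<times> 'o) set" where
  "Gcls C ab = {(c, d). \<exists>k. iso_obj C (ctens C (ctens C (fst ab) d) k) (ctens C (ctens C c (snd ab)) k)}"

definition Grep :: "('o \<times> 'o) set \<Rightarrow> 'o \<times> 'o" where
  "Grep X = (SOME p. p \<in> X)"

definition AC :: "('o,'m) smcat \<Rightarrow> ('o \<times> 'o) set monoid" where
  "AC C = \<lparr> carrier = range (Gcls C),
            mult = (\<lambda>X Y. Gcls C (ctens C (fst (Grep X)) (fst (Grep Y)),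
                                   ctens C (snd (Grep X)) (snd (Grep Y)))),
            one = Gcls C (cunit C, cunit C) \<rparr>"

definition cls :: "('o,'m) smcat \<Rightarrow> 'o \<Rightarrow> ('o \<times> 'o) set" where
  "cls C a = Gcls C (a, cunit C)"

definition Ale :: "('o,'m) smcat \<Rightarrow> ('o \<times> 'o) set \<Rightarrow> ('o \<times> 'o) set \<Rightarrow> bool" where
  "Ale C x y \<longleftrightarrow> (\<exists>a. y \<otimes>\<^bsub>AC C\<^esub> inv\<^bsub>AC C\<^esub> x = cls C a)"

datatype intv = IFin real real | IInf real

fun valid_intv :: "intv \<Rightarrow> bool" where
  "valid_intv (IFin q r) = (q < r)"
| "valid_intv (IInf q) = True"

text \<open>contains J I: J \<supseteq> I\<close>
fun contains :: "intv \<Rightarrow> intv \<Rightarrow> bool" where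
  "contains (IFin q r) (IFin q' r') = (q \<le> q' \<and> r' \<le> r)"
| "contains (IFin q r) (IInf q') = False"
| "contains (IInf q) (IFin q' r') = (q \<le> q')"
| "contains (IInf q) (IInf q') = (q \<le> q')"

definition is_pdgm :: "('o,'m) smcat \<Rightarrow> (intv \<Rightarrow> ('o \<times> 'o) set) \<Rightarrow> bool" where
  "is_pdgm C Y \<longleftrightarrow> (\<forall>I. valid_intv I \<longrightarrow> Y I \<in> carrier (AC C)) \<and>
     (\<exists>T. finite T \<and> (\<forall>I. valid_intv I \<longrightarrow> Y I \<noteq> \<one>\<^bsub>AC C\<^esub> \<longrightarrow>
        (case I of IFin q r \<Rightarrow> q \<in> T \<and> r \<in> T | IInf q \<Rightarrow> q \<in> T)))"

definition up_sum :: "('o,'m) smcat \<Rightarrow> (intv \<Rightarrow> ('o \<times> 'o) set) \<Rightarrow> intv \<Rightarrow> ('o \<times> 'o) set" where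
  "up_sum C Y I = finprod (AC C) Y {J. valid_intv J \<and> contains J I \<and> Y J \<noteq> \<one>\<^bsub>AC C\<^esub>}"

definition pdgm_hom :: "('o,'m) smcat \<Rightarrow> (intv \<Rightarrow> ('o \<times> 'o) set) \<Rightarrow> (intv \<Rightarrow> ('o \<times> 'o) set) \<Rightarrow> bool" where
  "pdgm_hom C Y1 Y2 \<longleftrightarrow> (\<forall>I. valid_intv I \<longrightarrow> Y1 I \<noteq> \<one>\<^bsub>AC C\<^esub> \<longrightarrow>
      Ale C (up_sum C Y1 I) (up_sum C Y2 I))"

fun grow :: "real \<Rightarrow> intv \<Rightarrow> intv" where
  "grow \<epsilon> (IFin p q) = IFin (p - \<epsilon>) (q + \<epsilon>)"
| "grow \<epsilon> (IInf p) = IInf (p - \<epsilon>)"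

definition nabla :: "real \<Rightarrow> (intv \<Rightarrow> 'a) \<Rightarrow> (intv \<Rightarrow> 'a)" where
  "nabla \<epsilon> Y = Y \<circ> grow \<epsilon>"

text \<open>For [p, s_i) we use the point max(p, s_(i-1)) (i.e. delta = s_i - max(p, s_(i-1)));
  for [p, \<infinity>) the point max(p, s_n) + 1.\<close>
fun dFA :: "('o,'m) smcat \<Rightarrow> real set \<Rightarrow> (real \<Rightarrow> real \<Rightarrow> 'm) \<Rightarrow> intv \<Rightarrow> ('o \<times> 'o) set" where
  "dFA C S F (IFin p q) =
     (if q \<in> S then cls C (im_obj C (F p (Max (insert p {s\<in>S. s < q}))))
      else cls C (im_obj C (F p q)))"
| "dFA C S F (IInf p) = cls C (im_obj C (F p (Max (insert p S) + 1)))"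

definition nxt :: "real set \<Rightarrow> real \<Rightarrow> real" where
  "nxt S b = (if \<exists>s\<in>S. b < s then Min {s\<in>S. b < s} else b + 1)"

definition prv :: "real set \<Rightarrow> real \<Rightarrow> real" where
  "prv S a = (if \<exists>s\<in>S. s < a then Max {s\<in>S. s < a} else a - 1)"

fun FA :: "('o,'m) smcat \<Rightarrow> real set \<Rightarrow> (real \<Rightarrow> real \<Rightarrow> 'm) \<Rightarrow> intv \<Rightarrow> ('o \<times> 'o) set" where
  "FA C S F (IFin a b) =
     (if a \<in> S \<and> b \<in> S \<and> a < b then
        dFA C S F (IFin a b) \<otimes>\<^bsub>AC C\<^esub> inv\<^bsub>AC C\<^esub> dFA C S F (IFin a (nxt S b))
          \<otimes>\<^bsub>AC C\<^esub> dFA C S F (IFin (prv S a) (nxt S b))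
          \<otimes>\<^bsub>AC C\<^esub> inv\<^bsub>AC C\<^esub> dFA C S F (IFin (prv S a) b)
      else \<one>\<^bsub>AC C\<^esub>)"
| "FA C S F (IInf a) =
     (if a \<in> S then dFA C S F (IInf a) \<otimes>\<^bsub>AC C\<^esub> inv\<^bsub>AC C\<^esub> dFA C S F (IInf (prv S a))
      else \<one>\<^bsub>AC C\<^esub>)"

end

theory Submission
  imports Defs "HOL-Library.Multiset"
begin


locale smcim =
  fixes C :: "('o,'m) smcat"
  assumes smc: "is_smc C" and hasim: "has_images C"
begin

lemma cat: "is_category C" using smc unfolding is_smc_def by simp

lemma id_dom[simp]: "cdom C (cid C a) = a" and id_cod[simp]: "ccod C (cid C a) = a"
  using cat unfolding is_category_def by auto

lemma comp_dom[simp]: "ccod C f = cdom C g \<Longrightarrow> cdom C (ccomp C g f) = cdom C f"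
  and comp_cod[simp]: "ccod C f = cdom C g \<Longrightarrow> ccod C (ccomp C g f) = ccod C g"
  using cat unfolding is_category_def by auto

lemma comp_id_r[simp]: "ccomp C f (cid C (cdom C f)) = f"
  and comp_id_l[simp]: "ccomp C (cid C (ccod C f)) f = f"
  using cat unfolding is_category_def by auto

lemma comp_id_r'[simp]: "cdom C f = a \<Longrightarrow> ccomp C f (cid C a) = f"
  and comp_id_l'[simp]: "ccod C f = a \<Longrightarrow> ccomp C (cid C a) f = f"
  by auto

lemma assoc: "ccod C f = cdom C g \<Longrightarrow> ccod C g = cdom C h \<Longrightarrow>
   ccomp C h (ccomp C g f) = ccomp C (ccomp C h g) f"
  using cat unfolding is_category_def by auto

lemma id_iso[simp]: "is_iso C (cid C a)"
  unfolding is_iso_def by (rule exI[of _ "cid C a"]) simp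

lemma iso_inv: assumes "is_iso C f"
  obtains g where "cdom C g = ccod C f" "ccod C g = cdom C f"
    "ccomp C g f = cid C (cdom C f)" "ccomp C f g = cid C (ccod C f)" "is_iso C g"
proof -
  obtain g where g: "cdom C g = ccod C f" "ccod C g = cdom C f"
    "ccomp C g f = cid C (cdom C f)" "ccomp C f g = cid C (ccod C f)"
    using assms unfolding is_iso_def by blast
  moreover have "is_iso C g" unfolding is_iso_def using g by (intro exI[of _ f]) auto
  ultimately show ?thesis using that by blast
qed

lemma iso_comp: assumes "is_iso C f" "is_iso C g" "ccod C f = cdom C g"
  shows "is_iso C (ccomp C g f)"
proof -
  obtain f' where f': "cdom C f' = ccod C f" "ccod C f' = cdom C f"
    "ccomp C f' f = cid C (cdom C f)" "ccomp C f f' = cid C (ccod C f)" "is_iso C f'"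
    using assms(1) by (rule iso_inv)
  obtain g' where g': "cdom C g' = ccod C g" "ccod C g' = cdom C g"
    "ccomp C g' g = cid C (cdom C g)" "ccomp C g g' = cid C (ccod C g)" "is_iso C g'"
    using assms(2) by (rule iso_inv)
  have 1: "ccomp C (ccomp C f' g') (ccomp C g f) = cid C (cdom C f)"
  proof -
    have "ccomp C (ccomp C f' g') (ccomp C g f) = ccomp C f' (ccomp C g' (ccomp C g f))"
      using assms f' g' assoc[of "ccomp C g f" g' f'] by simp
    also have "\<dots> = ccomp C f' (ccomp C (ccomp C g' g) f)"
      using assms f' g' assoc[of f g g'] by simp
    also have "\<dots> = cid C (cdom C f)" using assms f' g' by simp
    finally show ?thesis .
  qed
  have 2: "ccomp C (ccomp C g f) (ccomp C f' g') = cid C (ccod C g)"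
  proof -
    have "ccomp C (ccomp C g f) (ccomp C f' g') = ccomp C g (ccomp C f (ccomp C f' g'))"
      using assms f' g' assoc[of "ccomp C f' g'" f g] by simp
    also have "\<dots> = ccomp C g (ccomp C (ccomp C f f') g')"
      using assms f' g' assoc[of g' f' f] by simp
    also have "\<dots> = cid C (ccod C g)" using assms f' g' by simp
    finally show ?thesis .
  qed
  show ?thesis unfolding is_iso_def
    by (rule exI[of _ "ccomp C f' g'"]) (use assms f' g' 1 2 in simp)
qed

lemma iso_mono: "is_iso C f \<Longrightarrow> is_mono C f"
  unfolding is_mono_def
proof (intro allI impI)
  fix g h assume fi: "is_iso C f" and gh: "ccod C g = cdom C f" "ccod C h = cdom C f"
    "cdom C g = cdom C h" "ccomp C f g = ccomp C f h"
  from fi obtain f' where f': "cdom C f' = ccod C f" "ccod C f' = cdom C f"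
    "ccomp C f' f = cid C (cdom C f)" "ccomp C f f' = cid C (ccod C f)" "is_iso C f'"
    by (rule iso_inv)
  have "g = ccomp C (ccomp C f' f) g" using f' gh by simp
  also have "\<dots> = ccomp C f' (ccomp C f g)" using f' gh assoc[of g f f'] by simp
  also have "\<dots> = ccomp C f' (ccomp C f h)" using gh by simp
  also have "\<dots> = ccomp C (ccomp C f' f) h" using f' gh assoc[of h f f'] by simp
  also have "\<dots> = h" using f' gh by simp
  finally show "g = h" .
qed

lemma mono_comp: assumes "is_mono C f" "is_mono C g" "ccod C f = cdom C g"
  shows "is_mono C (ccomp C g f)"
  unfolding is_mono_def
proof (intro allI impI)
  fix x y assume xy: "ccod C x = cdom C (ccomp C g f)" "ccod C y = cdom C (ccomp C g f)"
    "cdom C x = cdom C y" "ccomp C (ccomp C g f) x = ccomp C (ccomp C g f) y"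
  have "ccomp C g (ccomp C f x) = ccomp C g (ccomp C f y)"
    using xy assms(3) by (simp add: assoc)
  then have "ccomp C f x = ccomp C f y" using assms(2) xy assms(3)
    unfolding is_mono_def by (metis comp_cod comp_dom)
  then show "x = y" using assms(1) xy assms(3) unfolding is_mono_def by simp
qed

lemma mono_cancel: assumes "is_mono C (ccomp C g f)" "ccod C f = cdom C g"
  shows "is_mono C f"
  unfolding is_mono_def
proof (intro allI impI)
  fix x y assume xy: "ccod C x = cdom C f" "ccod C y = cdom C f"
    "cdom C x = cdom C y" "ccomp C f x = ccomp C f y"
  have "ccomp C (ccomp C g f) x = ccomp C (ccomp C g f) y"
    using xy assms(2) by (metis assoc)
  then show "x = y" using assms xy unfolding is_mono_def by simp
qed

lemma mono_cancel_left: assumes "is_mono C h" "ccod C x = cdom C h" "ccod C y = cdom C h"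
    "cdom C x = cdom C y" "ccomp C h x = ccomp C h y" shows "x = y"
  using assms unfolding is_mono_def by blast

lemma iso_obj_refl[simp]: "iso_obj C a a"
  unfolding iso_obj_def by (rule exI[of _ "cid C a"]) simp

lemma iso_obj_sym: "iso_obj C a b \<Longrightarrow> iso_obj C b a"
  unfolding iso_obj_def by (metis iso_inv)

lemma iso_obj_trans: "iso_obj C a b \<Longrightarrow> iso_obj C b c \<Longrightarrow> iso_obj C a c"
  unfolding iso_obj_def by (metis comp_cod comp_dom iso_comp)

definition imh :: "'m \<Rightarrow> 'm" where "imh f = (SOME h. is_image C f h)"

lemma imh: "is_image C f (imh f)"
  using hasim unfolding has_images_def imh_def by (metis someI)

lemma im_obj_imh: "im_obj C f = cdom C (imh f)"
  unfolding im_obj_def imh_def by simp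

lemma image_unique: assumes "is_image C f h1" "is_image C f h2"
  shows "iso_obj C (cdom C h1) (cdom C h2)"
proof -
  from assms(1) have m1: "is_mono C h1" "ccod C h1 = ccod C f"
    and g1: "\<exists>g. cdom C g = cdom C f \<and> ccod C g = cdom C h1 \<and> ccomp C h1 g = f"
    and u1: "\<And>h' g'. is_mono C h' \<Longrightarrow> ccod C h' = ccod C f \<Longrightarrow> cdom C g' = cdom C f \<Longrightarrow>
        ccod C g' = cdom C h' \<Longrightarrow> ccomp C h' g' = f \<Longrightarrow>
        (\<exists>k. cdom C k = cdom C h1 \<and> ccod C k = cdom C h' \<and> ccomp C h' k = h1)"
    unfolding is_image_def by blast+
  from assms(2) have m2: "is_mono C h2" "ccod C h2 = ccod C f"
    and g2: "\<exists>g. cdom C g = cdom C f \<and> ccod C g = cdom C h2 \<and> ccomp C h2 g = f"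
    and u2: "\<And>h' g'. is_mono C h' \<Longrightarrow> ccod C h' = ccod C f \<Longrightarrow> cdom C g' = cdom C f \<Longrightarrow>
        ccod C g' = cdom C h' \<Longrightarrow> ccomp C h' g' = f \<Longrightarrow>
        (\<exists>k. cdom C k = cdom C h2 \<and> ccod C k = cdom C h' \<and> ccomp C h' k = h2)"
    unfolding is_image_def by blast+
  obtain k where k: "cdom C k = cdom C h1" "ccod C k = cdom C h2" "ccomp C h2 k = h1"
    using u1[OF m2] g2 by blast
  obtain k' where k': "cdom C k' = cdom C h2" "ccod C k' = cdom C h1" "ccomp C h1 k' = h2"
    using u2[OF m1] g1 by blast
  have "ccomp C h1 (ccomp C k' k) = ccomp C h1 (cid C (cdom C h1))"
    using k k' by (simp add: assoc)
  then have 1: "ccomp C k' k = cid C (cdom C h1)"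
    using mono_cancel_left[OF m1(1)] k k' by simp
  have "ccomp C h2 (ccomp C k k') = ccomp C h2 (cid C (cdom C h2))"
    using k k' by (simp add: assoc)
  then have 2: "ccomp C k k' = cid C (cdom C h2)"
    using mono_cancel_left[OF m2(1)] k k' by simp
  show ?thesis unfolding iso_obj_def is_iso_def
    by (rule exI[of _ k]) (use k k' 1 2 in auto)
qed

lemma image_univ: assumes "is_image C f h" "is_mono C h'" "ccod C h' = ccod C f"
  "cdom C g' = cdom C f" "ccod C g' = cdom C h'" "ccomp C h' g' = f"
  shows "\<exists>k. cdom C k = cdom C h \<and> ccod C k = cdom C h' \<and> ccomp C h' k = h"
  using assms unfolding is_image_def by blast

lemma image_fact: assumes "is_image C f h"
  obtains g where "cdom C g = cdom C f" "ccod C g = cdom C h" "ccomp C h g = f"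
    "is_mono C h" "ccod C h = ccod C f"
  using assms unfolding is_image_def by blast

lemma im_pre_iso: assumes "is_iso C a" "ccod C a = cdom C f"
  shows "iso_obj C (im_obj C (ccomp C f a)) (im_obj C f)"
proof -
  let ?h = "imh f"
  obtain g where g: "cdom C g = cdom C f" "ccod C g = cdom C ?h" "ccomp C ?h g = f"
    "is_mono C ?h" "ccod C ?h = ccod C f" using imh by (rule image_fact)
  obtain a' where a': "cdom C a' = ccod C a" "ccod C a' = cdom C a"
    "ccomp C a' a = cid C (cdom C a)" "ccomp C a a' = cid C (ccod C a)"
    using assms(1) by (rule iso_inv)
  have "is_image C (ccomp C f a) ?h"
    unfolding is_image_def
  proof (intro conjI allI impI)
    show "is_mono C ?h" by fact
    show "ccod C ?h = ccod C (ccomp C f a)" using g assms by simp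
    show "\<exists>g. cdom C g = cdom C (ccomp C f a) \<and> ccod C g = cdom C ?h \<and> ccomp C ?h g = ccomp C f a"
      by (rule exI[of _ "ccomp C g a"]) (use g assms in \<open>simp add: assoc\<close>)
  next
    fix h' g' assume H: "is_mono C h' \<and> ccod C h' = ccod C (ccomp C f a) \<and> cdom C g' = cdom C (ccomp C f a) \<and>
        ccod C g' = cdom C h' \<and> ccomp C h' g' = ccomp C f a"
    have t: "ccod C a' = cdom C g'" "ccod C g' = cdom C h'" using H assms a' by auto
    have "ccomp C h' (ccomp C g' a') = f"
    proof -
      have "ccomp C h' (ccomp C g' a') = ccomp C (ccomp C h' g') a'"
        using assoc[OF t] .
      also have "\<dots> = ccomp C (ccomp C f a) a'" using H by simp
      also have "\<dots> = ccomp C f (ccomp C a a')" using assms a' assoc[of a' a f] by simp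
      also have "\<dots> = ccomp C f (cid C (cdom C f))" using a' assms by simp
      finally show ?thesis by simp
    qed
    moreover have "is_mono C h'" "ccod C h' = ccod C f" using H assms(2) by (auto simp only: comp_cod)
    moreover have "cdom C (ccomp C g' a') = cdom C f" "ccod C (ccomp C g' a') = cdom C h'"
      using comp_dom[OF t(1)] comp_cod[OF t(1)] a'(1) assms(2) H by auto
    ultimately show "\<exists>k. cdom C k = cdom C ?h \<and> ccod C k = cdom C h' \<and> ccomp C h' k = ?h"
      using image_univ[OF imh[of f], of h' "ccomp C g' a'"] by blast
  qed
  then show ?thesis unfolding im_obj_imh using image_unique imh by blast
qed

lemma im_post_iso: assumes "is_iso C b" "ccod C f = cdom C b"
  shows "iso_obj C (im_obj C (ccomp C b f)) (im_obj C f)"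
proof -
  let ?h = "imh f"
  obtain g where g: "cdom C g = cdom C f" "ccod C g = cdom C ?h" "ccomp C ?h g = f"
    "is_mono C ?h" "ccod C ?h = ccod C f" using imh by (rule image_fact)
  obtain b' where b': "cdom C b' = ccod C b" "ccod C b' = cdom C b"
    "ccomp C b' b = cid C (cdom C b)" "ccomp C b b' = cid C (ccod C b)" "is_iso C b'"
    using assms(1) by (rule iso_inv)
  have "is_image C (ccomp C b f) (ccomp C b ?h)"
    unfolding is_image_def
  proof (intro conjI allI impI)
    show "is_mono C (ccomp C b ?h)" using mono_comp[OF g(4) iso_mono[OF assms(1)]] g assms by simp
    show "ccod C (ccomp C b ?h) = ccod C (ccomp C b f)" using g assms by simp
    show "\<exists>g. cdom C g = cdom C (ccomp C b f) \<and> ccod C g = cdom C (ccomp C b ?h) \<and> ccomp C (ccomp C b ?h) g = ccomp C b f"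
      by (rule exI[of _ g]) (use g assms in \<open>simp add: assoc[symmetric]\<close>)
  next
    fix h' g' assume H: "is_mono C h' \<and> ccod C h' = ccod C (ccomp C b f) \<and> cdom C g' = cdom C (ccomp C b f) \<and>
        ccod C g' = cdom C h' \<and> ccomp C h' g' = ccomp C b f"
    have m: "is_mono C (ccomp C b' h')" using mono_comp[OF _ iso_mono[OF b'(5)]] H b' assms by simp
    have e: "ccomp C (ccomp C b' h') g' = f"
    proof -
      have "ccomp C (ccomp C b' h') g' = ccomp C b' (ccomp C h' g')"
        using H assms b' assoc[of g' h' b'] by simp
      also have "\<dots> = ccomp C b' (ccomp C b f)" using H by simp
      also have "\<dots> = ccomp C (ccomp C b' b) f" using assms b' assoc[of f b b'] by simp
      finally show ?thesis using b' assms by simp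
    qed
    obtain k where k: "cdom C k = cdom C ?h" "ccod C k = cdom C (ccomp C b' h')"
      "ccomp C (ccomp C b' h') k = ?h"
      using image_univ[OF imh m _ _ _ e] H assms b' by auto
    have "ccomp C h' k = ccomp C b ?h"
    proof -
      have "ccomp C b ?h = ccomp C b (ccomp C (ccomp C b' h') k)" using k by simp
      also have "\<dots> = ccomp C b (ccomp C b' (ccomp C h' k))"
        using k H b' assms assoc[of k h' b'] by simp
      also have "\<dots> = ccomp C (ccomp C b b') (ccomp C h' k)"
        using k H b' assms assoc[of "ccomp C h' k" b' b] by simp
      also have "\<dots> = ccomp C h' k" using k H b' assms by simp
      finally show ?thesis by simp
    qed
    then show "\<exists>k. cdom C k = cdom C (ccomp C b ?h) \<and> ccod C k = cdom C h' \<and> ccomp C h' k = ccomp C b ?h"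
      using k H b' assms g by (intro exI[of _ k]) simp
  qed
  then have "iso_obj C (cdom C (imh (ccomp C b f))) (cdom C (ccomp C b ?h))"
    by (rule image_unique[OF imh])
  moreover have "cdom C (ccomp C b ?h) = cdom C ?h" using g(5) assms(2) by (simp only: comp_dom)
  ultimately show ?thesis unfolding im_obj_imh by (simp only:)
qed

end


context smcim begin

abbreviation cc (infixr "\<cdot>" 55) where "g \<cdot> f \<equiv> ccomp C g f"
abbreviation domA where "domA f \<equiv> cdom C f"
abbreviation codA where "codA f \<equiv> ccod C f"

lemma sandwich:
  assumes ty: "domA a1 = A0" "codA a1 = A" "domA \<alpha> = A" "codA \<alpha> = B" "domA a2 = B" "codA a2 = B0"
    "domA \<psi>1 = A'" "codA \<psi>1 = A" "domA \<phi>1 = A0" "codA \<phi>1 = A'"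
    "domA \<phi>2 = B" "codA \<phi>2 = B'" "domA \<psi>2 = B'" "codA \<psi>2 = B0"
    and isos: "is_iso C a1" "is_iso C a2"
    and e1: "\<psi>1 \<cdot> \<phi>1 = a1" and e2: "\<psi>2 \<cdot> \<phi>2 = a2"
    and e3: "\<phi>2 \<cdot> \<alpha> \<cdot> \<psi>1 = \<beta>"
    and e4: "\<psi>2 \<cdot> \<beta> \<cdot> \<phi>1 = a2 \<cdot> \<alpha> \<cdot> a1"
  shows "iso_obj C (im_obj C \<alpha>) (im_obj C \<beta>)"
proof -
  have tb: "domA \<beta> = A'" "codA \<beta> = B'" using e3[symmetric] ty by simp_all
  define ha where "ha = imh \<alpha>"
  define hb where "hb = imh \<beta>"
  obtain ga where ga: "domA ga = A" "codA ga = domA ha" "ha \<cdot> ga = \<alpha>" "is_mono C ha" "codA ha = B"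
    using image_fact[OF imh[of \<alpha>]] ty unfolding ha_def by metis
  obtain gb where gb: "domA gb = A'" "codA gb = domA hb" "hb \<cdot> gb = \<beta>" "is_mono C hb" "codA hb = B'"
    using image_fact[OF imh[of \<beta>]] tb unfolding hb_def by metis
  obtain a1' where a1': "domA a1' = A" "codA a1' = A0" "a1' \<cdot> a1 = cid C A0" "a1 \<cdot> a1' = cid C A"
    using iso_inv[OF isos(1)] ty by metis
  obtain a2' where a2': "domA a2' = B0" "codA a2' = B" "a2' \<cdot> a2 = cid C B" "a2 \<cdot> a2' = cid C B0"
    using iso_inv[OF isos(2)] ty by metis
  have m1: "is_mono C (\<phi>2 \<cdot> ha)"
  proof (rule mono_cancel[of \<psi>2])
    have "\<psi>2 \<cdot> \<phi>2 \<cdot> ha = a2 \<cdot> ha" using assoc[of ha \<phi>2 \<psi>2] ty ga e2 by simp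
    moreover have "is_mono C (a2 \<cdot> ha)" using mono_comp[OF ga(4) iso_mono[OF isos(2)]] ty ga by simp
    ultimately show "is_mono C (\<psi>2 \<cdot> \<phi>2 \<cdot> ha)" by simp
  qed (use ty ga in simp)
  have "\<beta> = (\<phi>2 \<cdot> ha) \<cdot> (ga \<cdot> \<psi>1)"
  proof -
    have "(\<phi>2 \<cdot> ha) \<cdot> (ga \<cdot> \<psi>1) = \<phi>2 \<cdot> (ha \<cdot> ga \<cdot> \<psi>1)"
      using assoc[of "ga \<cdot> \<psi>1" ha \<phi>2] ty ga by simp
    also have "\<dots> = \<phi>2 \<cdot> \<alpha> \<cdot> \<psi>1" using assoc[of \<psi>1 ga ha] ty ga by simp
    finally show ?thesis using e3 by simp
  qed
  moreover have "codA (\<phi>2 \<cdot> ha) = codA \<beta>" using ty ga tb by simp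
  moreover have "domA (ga \<cdot> \<psi>1) = domA \<beta>" "codA (ga \<cdot> \<psi>1) = domA (\<phi>2 \<cdot> ha)" using ty ga tb by simp_all
  ultimately obtain k where k: "domA k = domA hb" "codA k = domA ha" "(\<phi>2 \<cdot> ha) \<cdot> k = hb"
    using image_univ[OF imh[of \<beta>] m1, of "ga \<cdot> \<psi>1"] ty ga unfolding hb_def[symmetric]
    by (metis comp_dom)
  have mk: "is_mono C k" using mono_cancel[of "\<phi>2 \<cdot> ha" k] k gb ga ty by simp
  have mhk: "is_mono C (ha \<cdot> k)" using mono_comp[OF mk ga(4)] k by simp
  define g' where "g' = gb \<cdot> \<phi>1 \<cdot> a1'"
  have tg': "domA g' = A" "codA g' = domA hb" unfolding g'_def using ty gb a1' by simp_all
  have hk: "\<phi>2 \<cdot> ha \<cdot> k = hb" using k assoc[of k ha \<phi>2] ty ga by simp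
  have "a2 \<cdot> ((ha \<cdot> k) \<cdot> g') = a2 \<cdot> \<alpha>"
  proof -
    have "a2 \<cdot> ((ha \<cdot> k) \<cdot> g') = (\<psi>2 \<cdot> \<phi>2) \<cdot> ((ha \<cdot> k) \<cdot> g')" using e2 by simp
    also have "\<dots> = \<psi>2 \<cdot> (\<phi>2 \<cdot> ((ha \<cdot> k) \<cdot> g'))"
      using assoc[of "(ha \<cdot> k) \<cdot> g'" \<phi>2 \<psi>2] ty ga k tg' by simp
    also have "\<phi>2 \<cdot> ((ha \<cdot> k) \<cdot> g') = (\<phi>2 \<cdot> (ha \<cdot> k)) \<cdot> g'"
      using assoc[of g' "ha \<cdot> k" \<phi>2] ty ga k tg' by simp
    also have "\<dots> = hb \<cdot> g'" using hk by simp
    also have "\<dots> = (hb \<cdot> gb) \<cdot> \<phi>1 \<cdot> a1'" unfolding g'_def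
      using assoc[of "\<phi>1 \<cdot> a1'" gb hb] ty gb a1' by simp
    also have "\<dots> = \<beta> \<cdot> \<phi>1 \<cdot> a1'" using gb by simp
    also have "\<psi>2 \<cdot> (\<beta> \<cdot> \<phi>1 \<cdot> a1') = (\<psi>2 \<cdot> \<beta> \<cdot> \<phi>1) \<cdot> a1'"
      using assoc[of a1' \<phi>1 \<beta>] assoc[of a1' "\<beta> \<cdot> \<phi>1" \<psi>2] ty tb a1' by simp
    also have "\<dots> = (a2 \<cdot> \<alpha> \<cdot> a1) \<cdot> a1'" using e4 by simp
    also have "\<dots> = a2 \<cdot> \<alpha> \<cdot> (a1 \<cdot> a1')"
      using assoc[of a1' a1 "a2 \<cdot> \<alpha>"] assoc[of a1 \<alpha> a2] ty a1' by simp
    also have "\<dots> = a2 \<cdot> \<alpha>" using a1' ty by simp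
    finally show ?thesis .
  qed
  then have hkg: "(ha \<cdot> k) \<cdot> g' = \<alpha>"
    using mono_cancel_left[OF iso_mono[OF isos(2)]] ty ga k tg' by simp
  obtain k' where k': "domA k' = domA ha" "codA k' = domA (ha \<cdot> k)" "(ha \<cdot> k) \<cdot> k' = ha"
    using image_univ[OF imh[of \<alpha>] mhk _ _ _ hkg] ty ga k tg' unfolding ha_def[symmetric] by auto
  have tk': "codA k' = domA hb" using k' k ga by simp
  have "ha \<cdot> (k \<cdot> k') = ha \<cdot> cid C (domA ha)"
    using k' assoc[of k' k ha] k ga tk' by simp
  then have kk': "k \<cdot> k' = cid C (domA ha)"
    using mono_cancel_left[OF ga(4)] k k' tk' by simp
  have "hb \<cdot> (k' \<cdot> k) = hb \<cdot> cid C (domA hb)"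
  proof -
    have "hb \<cdot> (k' \<cdot> k) = ((\<phi>2 \<cdot> ha) \<cdot> k) \<cdot> (k' \<cdot> k)" using k by simp
    also have "\<dots> = (\<phi>2 \<cdot> ha) \<cdot> (k \<cdot> (k' \<cdot> k))"
      using assoc[of "k' \<cdot> k" k "\<phi>2 \<cdot> ha"] k k' tk' ga ty by simp
    also have "k \<cdot> (k' \<cdot> k) = (k \<cdot> k') \<cdot> k" using assoc[of k k' k] k k' tk' by simp
    also have "\<dots> = k" using kk' k by simp
    finally show ?thesis using k by simp
  qed
  then have k'k: "k' \<cdot> k = cid C (domA hb)"
    using mono_cancel_left[OF gb(4)] k k' tk' by simp
  have "iso_obj C (domA hb) (domA ha)" unfolding iso_obj_def is_iso_def
    by (rule exI[of _ k]) (use k k' tk' kk' k'k in auto)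
  then show ?thesis unfolding im_obj_imh ha_def hb_def by (rule iso_obj_sym)
qed

end


context smcim begin

lemma tens_dom[simp]: "cdom C (ctensm C f g) = ctens C (cdom C f) (cdom C g)"
  and tens_cod[simp]: "ccod C (ctensm C f g) = ctens C (ccod C f) (ccod C g)"
  using smc unfolding is_smc_def by auto

lemma tens_id[simp]: "ctensm C (cid C a) (cid C b) = cid C (ctens C a b)"
  using smc unfolding is_smc_def by auto

lemma tens_comp: "ccod C f = cdom C g \<Longrightarrow> ccod C f' = cdom C g' \<Longrightarrow>
   ctensm C (ccomp C g f) (ccomp C g' f') = ccomp C (ctensm C g g') (ctensm C f f')"
  using smc unfolding is_smc_def by auto

lemma tens_iso: assumes "is_iso C f" "is_iso C g" shows "is_iso C (ctensm C f g)"
proof -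
  obtain f' where f': "cdom C f' = ccod C f" "ccod C f' = cdom C f"
    "ccomp C f' f = cid C (cdom C f)" "ccomp C f f' = cid C (ccod C f)" "is_iso C f'"
    using assms(1) by (rule iso_inv)
  obtain g' where g': "cdom C g' = ccod C g" "ccod C g' = cdom C g"
    "ccomp C g' g = cid C (cdom C g)" "ccomp C g g' = cid C (ccod C g)" "is_iso C g'"
    using assms(2) by (rule iso_inv)
  have 1: "ccomp C (ctensm C f' g') (ctensm C f g) = cid C (cdom C (ctensm C f g))"
    using tens_comp[of f f' g g'] f' g' by simp
  have 2: "ccomp C (ctensm C f g) (ctensm C f' g') = cid C (ccod C (ctensm C f g))"
    using tens_comp[of f' f g' g] f' g' by simp
  show ?thesis unfolding is_iso_def
    by (rule exI[of _ "ctensm C f' g'"]) (use 1 2 f' g' in simp)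
qed

lemma iso_obj_tens: "iso_obj C a a' \<Longrightarrow> iso_obj C b b' \<Longrightarrow> iso_obj C (ctens C a b) (ctens C a' b')"
  unfolding iso_obj_def using tens_iso tens_dom tens_cod by metis

lemma assoc_arr: "cdom C (cassoc C a b c) = ctens C (ctens C a b) c \<and>
      ccod C (cassoc C a b c) = ctens C a (ctens C b c) \<and> is_iso C (cassoc C a b c)"
  using smc unfolding is_smc_def by (elim conjE) blast
lemma lunit_arr: "cdom C (clunit C a) = ctens C (cunit C) a \<and> ccod C (clunit C a) = a \<and>
          is_iso C (clunit C a)"
  using smc unfolding is_smc_def by (elim conjE) blast
lemma runit_arr: "cdom C (crunit C a) = ctens C a (cunit C) \<and> ccod C (crunit C a) = a \<and>
          is_iso C (crunit C a)"
  using smc unfolding is_smc_def by (elim conjE) blast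
lemma braid_arr: "cdom C (cbraid C a b) = ctens C a b \<and> ccod C (cbraid C a b) = ctens C b a \<and>
          is_iso C (cbraid C a b)"
  using smc unfolding is_smc_def by (elim conjE) blast

lemma iso_obj_assoc: "iso_obj C (ctens C (ctens C a b) c) (ctens C a (ctens C b c))"
  unfolding iso_obj_def using assoc_arr by blast

lemma iso_obj_lunit: "iso_obj C (ctens C (cunit C) a) a"
  unfolding iso_obj_def using lunit_arr by blast

lemma iso_obj_runit: "iso_obj C (ctens C a (cunit C)) a"
  unfolding iso_obj_def using runit_arr by blast

lemma iso_obj_braid: "iso_obj C (ctens C a b) (ctens C b a)"
  unfolding iso_obj_def using braid_arr by blast

lemma iso_obj_lcomm: "iso_obj C (ctens C a (ctens C b c)) (ctens C b (ctens C a c))"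
proof -
  have "iso_obj C (ctens C a (ctens C b c)) (ctens C (ctens C a b) c)"
    using iso_obj_assoc iso_obj_sym by blast
  moreover have "iso_obj C (ctens C (ctens C a b) c) (ctens C (ctens C b a) c)"
    using iso_obj_tens iso_obj_braid iso_obj_refl by blast
  moreover have "iso_obj C (ctens C (ctens C b a) c) (ctens C b (ctens C a c))"
    using iso_obj_assoc by blast
  ultimately show ?thesis using iso_obj_trans by blast
qed

end

datatype 'a tex = TA 'a | TT "'a tex" "'a tex" | TU

context smcim begin

fun tev :: "'o tex \<Rightarrow> 'o" where
  "tev (TA a) = a" | "tev (TT x y) = ctens C (tev x) (tev y)" | "tev TU = cunit C"

fun tat :: "'o tex \<Rightarrow> 'o list" where
  "tat (TA a) = [a]" | "tat (TT x y) = tat x @ tat y" | "tat TU = []"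

definition tlist :: "'o list \<Rightarrow> 'o" where "tlist xs = foldr (ctens C) xs (cunit C)"

lemma tlist_simps[simp]: "tlist [] = cunit C" "tlist (x # xs) = ctens C x (tlist xs)"
  unfolding tlist_def by simp_all

lemma tlist_app: "iso_obj C (tlist (xs @ ys)) (ctens C (tlist xs) (tlist ys))"
proof (induction xs)
  case Nil then show ?case using iso_obj_lunit iso_obj_sym by simp
next
  case (Cons x xs)
  have "iso_obj C (ctens C x (tlist (xs @ ys))) (ctens C x (ctens C (tlist xs) (tlist ys)))"
    using iso_obj_tens[OF iso_obj_refl Cons.IH] .
  moreover have "iso_obj C (ctens C x (ctens C (tlist xs) (tlist ys))) (ctens C (ctens C x (tlist xs)) (tlist ys))"
    using iso_obj_assoc iso_obj_sym by blast
  ultimately show ?case using iso_obj_trans by simp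
qed

lemma tev_tlist: "iso_obj C (tev x) (tlist (tat x))"
proof (induction x)
  case (TA a)
  have "iso_obj C a (ctens C a (cunit C))"
    using iso_obj_runit iso_obj_sym by blast
  then show ?case by simp
next
  case (TT x y)
  have 1: "iso_obj C (tev (TT x y)) (ctens C (tlist (tat x)) (tlist (tat y)))"
    using iso_obj_tens[OF TT.IH] by simp
  have 2: "iso_obj C (ctens C (tlist (tat x)) (tlist (tat y))) (tlist (tat (TT x y)))"
    using iso_obj_sym[OF tlist_app] by simp
  show ?case using iso_obj_trans[OF 1 2] .
qed simp

lemma tlist_remove1: "x \<in> set ys \<Longrightarrow> iso_obj C (tlist ys) (ctens C x (tlist (remove1 x ys)))"
proof (induction ys)
  case Nil then show ?case by simp
next
  case (Cons y ys)
  show ?case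
  proof (cases "x = y")
    case True then show ?thesis by simp
  next
    case False
    then have "x \<in> set ys" using Cons.prems by simp
    then have "iso_obj C (ctens C y (tlist ys)) (ctens C y (ctens C x (tlist (remove1 x ys))))"
      using iso_obj_tens[OF iso_obj_refl Cons.IH] by blast
    then have "iso_obj C (tlist (y # ys)) (ctens C x (ctens C y (tlist (remove1 x ys))))"
      using iso_obj_trans[OF _ iso_obj_lcomm] by simp
    then show ?thesis using False by simp
  qed
qed

lemma tlist_perm: "mset xs = mset ys \<Longrightarrow> iso_obj C (tlist xs) (tlist ys)"
proof (induction xs arbitrary: ys)
  case Nil then have "ys = []" by simp
  then show ?case by simp
next
  case (Cons x xs)
  then have xin: "x \<in> set ys" by (metis list.set_intros(1) set_mset_mset)
  have "mset xs = mset (remove1 x ys)" using Cons.prems by (simp add: mset_remove1, metis add_mset_remove_trivial)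
  then have "iso_obj C (ctens C x (tlist xs)) (ctens C x (tlist (remove1 x ys)))"
    using iso_obj_tens[OF iso_obj_refl Cons.IH] by blast
  then have "iso_obj C (tlist (x # xs)) (ctens C x (tlist (remove1 x ys)))" by simp
  then show ?case using iso_obj_trans[OF _ iso_obj_sym[OF tlist_remove1[OF xin]]] by blast
qed

lemma rearr: "mset (tat x) = mset (tat y) \<Longrightarrow> iso_obj C (tev x) (tev y)"
  using iso_obj_trans[OF iso_obj_trans[OF tev_tlist tlist_perm] iso_obj_sym[OF tev_tlist]] by blast

lemma test: "iso_obj C (ctens C (ctens C a f) (ctens C (ctens C c d) (ctens C k k')))
   (ctens C (ctens C (ctens C a d) k) (ctens C (ctens C c f) k'))"
  using rearr[of "TT (TT (TA a) (TA f)) (TT (TT (TA c) (TA d)) (TT (TA k) (TA k')))"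
      "TT (TT (TT (TA a) (TA d)) (TA k)) (TT (TT (TA c) (TA f)) (TA k'))"]
  by (simp add: add_mset_commute)

end


context smcim begin

definition GR :: "'o \<times> 'o \<Rightarrow> 'o \<times> 'o \<Rightarrow> bool" where
  "GR ab cd \<longleftrightarrow> (\<exists>k. iso_obj C (ctens C (ctens C (fst ab) (snd cd)) k) (ctens C (ctens C (fst cd) (snd ab)) k))"

lemma Gcls_GR: "Gcls C ab = {cd. GR ab cd}"
  unfolding Gcls_def GR_def by auto

lemma GR_I: "iso_obj C (ctens C p s) (ctens C r q) \<Longrightarrow> GR (p,q) (r,s)"
  unfolding GR_def using iso_obj_tens[OF _ iso_obj_refl] by auto

lemma GR_refl: "GR ab ab" unfolding GR_def by auto

lemma GR_sym: "GR ab cd \<Longrightarrow> GR cd ab" unfolding GR_def using iso_obj_sym by blast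

lemma GR_trans: assumes "GR (a,b) (c,d)" "GR (c,d) (e,f)" shows "GR (a,b) (e,f)"
proof -
  obtain k where H1: "iso_obj C (ctens C (ctens C a d) k) (ctens C (ctens C c b) k)"
    using assms(1) unfolding GR_def by auto
  obtain k' where H2: "iso_obj C (ctens C (ctens C c f) k') (ctens C (ctens C e d) k')"
    using assms(2) unfolding GR_def by auto
  define K where "K = ctens C (ctens C c d) (ctens C k k')"
  have 1: "iso_obj C (ctens C (ctens C a f) K) (ctens C (ctens C (ctens C a d) k) (ctens C (ctens C c f) k'))"
    unfolding K_def
    using rearr[of "TT (TT (TA a) (TA f)) (TT (TT (TA c) (TA d)) (TT (TA k) (TA k')))"
      "TT (TT (TT (TA a) (TA d)) (TA k)) (TT (TT (TA c) (TA f)) (TA k'))"]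
    by (simp add: add_mset_commute)
  have 2: "iso_obj C (ctens C (ctens C (ctens C a d) k) (ctens C (ctens C c f) k'))
      (ctens C (ctens C (ctens C c b) k) (ctens C (ctens C e d) k'))"
    by (rule iso_obj_tens[OF H1 H2])
  have 3: "iso_obj C (ctens C (ctens C (ctens C c b) k) (ctens C (ctens C e d) k')) (ctens C (ctens C e b) K)"
    unfolding K_def
    using rearr[of "TT (TT (TT (TA c) (TA b)) (TA k)) (TT (TT (TA e) (TA d)) (TA k'))"
      "TT (TT (TA e) (TA b)) (TT (TT (TA c) (TA d)) (TT (TA k) (TA k')))"]
    by (simp add: add_mset_commute)
  show ?thesis unfolding GR_def using iso_obj_trans[OF iso_obj_trans[OF 1 2] 3] by auto
qed

lemma GR_trans': "GR ab cd \<Longrightarrow> GR cd ef \<Longrightarrow> GR ab ef"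
  using GR_trans by (metis prod.collapse)

lemma Gcls_eq: "Gcls C ab = Gcls C cd \<longleftrightarrow> GR ab cd"
proof
  assume "Gcls C ab = Gcls C cd"
  then have "cd \<in> Gcls C ab" using GR_refl unfolding Gcls_GR by auto
  then show "GR ab cd" unfolding Gcls_GR by auto
next
  assume "GR ab cd"
  then show "Gcls C ab = Gcls C cd" unfolding Gcls_GR
    using GR_trans' GR_sym by blast
qed

lemma Grep_in: "GR ab (Grep (Gcls C ab))"
proof -
  have "ab \<in> Gcls C ab" unfolding Gcls_GR using GR_refl by auto
  then have "Grep (Gcls C ab) \<in> Gcls C ab" unfolding Grep_def by (metis someI)
  then show ?thesis unfolding Gcls_GR by auto
qed

lemma AC_mult: "monoid.mult (AC C) (Gcls C (a,b)) (Gcls C (c,d)) = Gcls C (ctens C a c, ctens C b d)"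
proof -
  obtain a' b' where ab: "Grep (Gcls C (a,b)) = (a',b')" by force
  obtain c' d' where cd: "Grep (Gcls C (c,d)) = (c',d')" by force
  obtain k where H1: "iso_obj C (ctens C (ctens C a b') k) (ctens C (ctens C a' b) k)"
    using Grep_in[of "(a,b)"] ab unfolding GR_def by auto
  obtain k' where H2: "iso_obj C (ctens C (ctens C c d') k') (ctens C (ctens C c' d) k')"
    using Grep_in[of "(c,d)"] cd unfolding GR_def by auto
  have 1: "iso_obj C (ctens C (ctens C (ctens C a c) (ctens C b' d')) (ctens C k k'))
     (ctens C (ctens C (ctens C a b') k) (ctens C (ctens C c d') k'))"
    using rearr[of "TT (TT (TT (TA a) (TA c)) (TT (TA b') (TA d'))) (TT (TA k) (TA k'))"
      "TT (TT (TT (TA a) (TA b')) (TA k)) (TT (TT (TA c) (TA d')) (TA k'))"]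
    by (simp add: add_mset_commute)
  have 2: "iso_obj C (ctens C (ctens C (ctens C a b') k) (ctens C (ctens C c d') k'))
      (ctens C (ctens C (ctens C a' b) k) (ctens C (ctens C c' d) k'))"
    by (rule iso_obj_tens[OF H1 H2])
  have 3: "iso_obj C (ctens C (ctens C (ctens C a' b) k) (ctens C (ctens C c' d) k'))
     (ctens C (ctens C (ctens C a' c') (ctens C b d)) (ctens C k k'))"
    using rearr[of "TT (TT (TT (TA a') (TA b)) (TA k)) (TT (TT (TA c') (TA d)) (TA k'))"
      "TT (TT (TT (TA a') (TA c')) (TT (TA b) (TA d))) (TT (TA k) (TA k'))"]
    by (simp add: add_mset_commute)
  have "GR (ctens C a c, ctens C b d) (ctens C a' c', ctens C b' d')"
    unfolding GR_def using iso_obj_trans[OF iso_obj_trans[OF 1 2] 3] by auto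
  then show ?thesis unfolding AC_def using ab cd Gcls_eq GR_sym by simp
qed

lemma AC_carrier: "x \<in> carrier (AC C) \<longleftrightarrow> (\<exists>a b. x = Gcls C (a,b))"
  unfolding AC_def by auto

lemma AC_one: "monoid.one (AC C) = Gcls C (cunit C, cunit C)"
  unfolding AC_def by simp

lemma comm_group_AC: "comm_group (AC C)"
proof (rule comm_groupI)
  fix x y assume "x \<in> carrier (AC C)" "y \<in> carrier (AC C)"
  then obtain a b c d where "x = Gcls C (a,b)" "y = Gcls C (c,d)" unfolding AC_carrier by auto
  then show "x \<otimes>\<^bsub>AC C\<^esub> y \<in> carrier (AC C)" using AC_mult AC_carrier by auto
next
  show "\<one>\<^bsub>AC C\<^esub> \<in> carrier (AC C)" using AC_one AC_carrier by auto
next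
  fix x y z assume "x \<in> carrier (AC C)" "y \<in> carrier (AC C)" "z \<in> carrier (AC C)"
  then obtain a b c d e f where xyz: "x = Gcls C (a,b)" "y = Gcls C (c,d)" "z = Gcls C (e,f)"
    unfolding AC_carrier by auto
  have "iso_obj C (ctens C (ctens C (ctens C a c) e) (ctens C b (ctens C d f)))
     (ctens C (ctens C a (ctens C c e)) (ctens C (ctens C b d) f))"
    using rearr[of "TT (TT (TT (TA a) (TA c)) (TA e)) (TT (TA b) (TT (TA d) (TA f)))"
      "TT (TT (TA a) (TT (TA c) (TA e))) (TT (TT (TA b) (TA d)) (TA f))"]
    by (simp add: add_mset_commute)
  then show "x \<otimes>\<^bsub>AC C\<^esub> y \<otimes>\<^bsub>AC C\<^esub> z = x \<otimes>\<^bsub>AC C\<^esub> (y \<otimes>\<^bsub>AC C\<^esub> z)"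
    using xyz AC_mult Gcls_eq GR_I by simp
next
  fix x y assume "x \<in> carrier (AC C)" "y \<in> carrier (AC C)"
  then obtain a b c d where xy: "x = Gcls C (a,b)" "y = Gcls C (c,d)" unfolding AC_carrier by auto
  have "iso_obj C (ctens C (ctens C a c) (ctens C d b)) (ctens C (ctens C c a) (ctens C b d))"
    using rearr[of "TT (TT (TA a) (TA c)) (TT (TA d) (TA b))" "TT (TT (TA c) (TA a)) (TT (TA b) (TA d))"]
    by (simp add: add_mset_commute)
  then show "x \<otimes>\<^bsub>AC C\<^esub> y = y \<otimes>\<^bsub>AC C\<^esub> x"
    using xy AC_mult Gcls_eq GR_I by simp
next
  fix x assume "x \<in> carrier (AC C)"
  then obtain a b where x: "x = Gcls C (a,b)" unfolding AC_carrier by auto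
  have "iso_obj C (ctens C (ctens C (cunit C) a) b) (ctens C a (ctens C (cunit C) b))"
    using rearr[of "TT (TT TU (TA a)) (TA b)" "TT (TA a) (TT TU (TA b))"]
    by (simp add: add_mset_commute)
  then show "\<one>\<^bsub>AC C\<^esub> \<otimes>\<^bsub>AC C\<^esub> x = x"
    using x AC_one AC_mult Gcls_eq GR_I by simp
next
  fix x assume "x \<in> carrier (AC C)"
  then obtain a b where x: "x = Gcls C (a,b)" unfolding AC_carrier by auto
  have "iso_obj C (ctens C (ctens C b a) (cunit C)) (ctens C (cunit C) (ctens C a b))"
    using rearr[of "TT (TT (TA b) (TA a)) TU" "TT TU (TT (TA a) (TA b))"]
    by (simp add: add_mset_commute)
  then have "Gcls C (b,a) \<otimes>\<^bsub>AC C\<^esub> x = \<one>\<^bsub>AC C\<^esub>"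
    using x AC_one AC_mult Gcls_eq GR_I by simp
  then show "\<exists>y\<in>carrier (AC C). y \<otimes>\<^bsub>AC C\<^esub> x = \<one>\<^bsub>AC C\<^esub>"
    using AC_carrier by blast
qed

lemma cls_carrier[simp]: "cls C a \<in> carrier (AC C)"
  unfolding cls_def AC_carrier by auto

lemma cls_unit: "cls C (cunit C) = \<one>\<^bsub>AC C\<^esub>"
  unfolding cls_def AC_one by simp

lemma cls_iso: "iso_obj C a b \<Longrightarrow> cls C a = cls C b"
  unfolding cls_def Gcls_eq
  by (rule GR_I) (use iso_obj_tens[OF _ iso_obj_refl] in blast)

end


definition nc :: "real set \<Rightarrow> real \<Rightarrow> real \<Rightarrow> bool" where
  "nc S u v \<longleftrightarrow> (\<forall>s\<in>S. \<not> (min u v < s \<and> s \<le> max u v))"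

lemma nc_sym: "nc S u v = nc S v u" unfolding nc_def by (auto simp: min.commute max.commute)
lemma nc_refl[simp]: "nc S u u" unfolding nc_def by auto
lemma nc_trans: "nc S u v \<Longrightarrow> nc S v w \<Longrightarrow> nc S u w"
  unfolding nc_def by (auto simp: min_def max_def split: if_splits)

locale cpmod = smcim C for C :: "('o,'m) smcat" +
  fixes S :: "real set" and F :: "real \<Rightarrow> real \<Rightarrow> 'm"
  assumes cons: "constructible C S F"
begin

lemma finS: "finite S" and neS: "S \<noteq> {}" and pm: "is_pmod C F"
  using cons unfolding constructible_def by auto

lemma F_dom[simp]: "p \<le> q \<Longrightarrow> cdom C (F p q) = pobj C F p"
  and F_cod[simp]: "p \<le> q \<Longrightarrow> ccod C (F p q) = pobj C F q"
  using pm unfolding is_pmod_def by auto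

lemma F_id: "F p p = cid C (pobj C F p)" using pm unfolding is_pmod_def by auto

lemma F_comp: "p \<le> q \<Longrightarrow> q \<le> r \<Longrightarrow> ccomp C (F q r) (F p q) = F p r"
  using pm unfolding is_pmod_def by auto

lemma F_iso: assumes "u \<le> v" "nc S u v" shows "is_iso C (F u v)"
proof (cases "v < Min S")
  case True then show ?thesis using cons assms unfolding constructible_def by simp
next
  case False
  have "Min S \<in> S" using finS neS by simp
  then have "Min S \<le> u" using assms False unfolding nc_def by (auto simp: min_def max_def)
  then show ?thesis using cons assms unfolding constructible_def nc_def by (simp add: min_def max_def)
qed

definition V :: "real \<Rightarrow> real \<Rightarrow> ('o \<times> 'o) set" where
  "V x y = cls C (im_obj C (F x y))"

lemma V_pre: assumes "x \<le> x'" "x' \<le> y" "nc S x x'" shows "V x y = V x' y"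
proof -
  have "F x y = ccomp C (F x' y) (F x x')" using F_comp assms by simp
  then show ?thesis unfolding V_def
    using cls_iso[OF im_pre_iso[OF F_iso[OF assms(1,3)]]] assms by simp
qed

lemma V_post: assumes "x \<le> y" "y \<le> y'" "nc S y y'" shows "V x y = V x y'"
proof -
  have "F x y' = ccomp C (F y y') (F x y)" using F_comp assms by simp
  then show ?thesis unfolding V_def
    using cls_iso[OF im_post_iso[OF F_iso[OF assms(2,3)]]] assms by simp
qed

lemma V_cell: assumes "x \<le> y" "x' \<le> y'" "nc S x x'" "nc S y y'" shows "V x y = V x' y'"
proof (cases "max x x' \<le> min y y'")
  case True
  define a where "a = max x x'"
  define b where "b = min y y'"
  have "V x y = V a y"
    by (rule V_pre) (use True assms in \<open>auto simp: a_def b_def max_def min_def split: if_splits\<close>)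
  also have "\<dots> = V a b"
    by (rule V_post[symmetric]) (use True assms in \<open>auto simp: a_def b_def max_def min_def nc_sym split: if_splits\<close>)
  also have "\<dots> = V x' b"
    by (rule V_pre[symmetric]) (use True assms in \<open>auto simp: a_def b_def max_def min_def nc_sym split: if_splits\<close>)
  also have "\<dots> = V x' y'"
    by (rule V_post) (use True assms in \<open>auto simp: a_def b_def max_def min_def nc_sym split: if_splits\<close>)
  finally show ?thesis .
next
  case False
  then have cases: "(x \<le> y \<and> y < x' \<and> x' \<le> y') \<or> (x' \<le> y' \<and> y' < x \<and> x \<le> y)"
    using assms by (auto simp: max_def min_def split: if_splits)
  have nxy: "nc S x y" and nx'y': "nc S x' y'"
    using cases assms unfolding nc_def by (auto simp: max_def min_def split: if_splits; force)+
  have "V x y = V x x" using V_post[of x x y] nxy assms by simp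
  also have "\<dots> = V x' x'"
  proof (cases "x \<le> x'")
    case True
    then show ?thesis using V_post[of x x x'] V_pre[of x x' x'] assms by simp
  next
    case False
    then show ?thesis using V_post[of x' x' x] V_pre[of x' x x] assms by (simp add: nc_sym)
  qed
  also have "\<dots> = V x' y'" using V_post[of x' x' y'] nx'y' assms by simp
  finally show ?thesis .
qed

lemma dFA_fin: assumes "x \<le> u" "u < y" "\<forall>s\<in>S. \<not> (u < s \<and> s < y)"
  shows "dFA C S F (IFin x y) = V x u"
proof (cases "y \<in> S")
  case True
  define w where "w = Max (insert x {s\<in>S. s < y})"
  have fin: "finite (insert x {s\<in>S. s < y})" using finS by simp
  have wx: "x \<le> w" unfolding w_def using fin by simp
  have wu: "w \<le> u" unfolding w_def using fin assms by (auto intro!: Max.boundedI)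
  have "nc S w u" unfolding nc_def
  proof
    fix s assume s: "s \<in> S"
    show "\<not> (min w u < s \<and> s \<le> max w u)"
    proof
      assume "min w u < s \<and> s \<le> max w u"
      then have "w < s" "s \<le> u" using wu by auto
      then have "s \<in> insert x {s\<in>S. s < y}" using s assms by auto
      then have "s \<le> w" unfolding w_def using fin by simp
      then show False using \<open>w < s\<close> by simp
    qed
  qed
  then have "V x w = V x u" using V_cell[of x w x u] wx wu by simp
  then show ?thesis using True by (simp add: V_def w_def)
next
  case False
  have "nc S u y" unfolding nc_def using assms False by (auto simp: min_def max_def)
  then have "V x y = V x u" using V_cell[of x y x u] assms by (simp add: nc_sym)
  then show ?thesis using False by (simp add: V_def)
qed

lemma dFA_inf: assumes "x \<le> u" "\<forall>s\<in>S. s \<le> u"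
  shows "dFA C S F (IInf x) = V x u"
proof -
  define w where "w = Max (insert x S) + 1"
  have fin: "finite (insert x S)" using finS by simp
  have mx: "x \<le> Max (insert x S)" by (rule Max_ge[OF fin]) simp
  have ms: "s \<le> Max (insert x S)" if "s \<in> S" for s by (rule Max_ge[OF fin]) (use that in simp)
  have wx: "x \<le> w" unfolding w_def using mx by linarith
  have ws: "\<forall>s\<in>S. s < w" unfolding w_def using ms by fastforce
  have "nc S w u" unfolding nc_def using ws assms by (auto simp: min_def max_def)
  then have "V x w = V x u" using V_cell[of x w x u] wx assms by simp
  then show ?thesis by (simp add: V_def w_def)
qed

end


context comm_group begin
lemma cancel_l: "b \<in> carrier G \<Longrightarrow> x \<in> carrier G \<Longrightarrow> inv b \<otimes> (b \<otimes> x) = x"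
  by (simp add: m_assoc[symmetric])
lemma tel2: "a \<in> carrier G \<Longrightarrow> b \<in> carrier G \<Longrightarrow> c \<in> carrier G \<Longrightarrow>
  (a \<otimes> inv b) \<otimes> (b \<otimes> inv c) = a \<otimes> inv c"
  by (simp add: m_assoc cancel_l)
lemma tel4: "a \<in> carrier G \<Longrightarrow> b \<in> carrier G \<Longrightarrow> c \<in> carrier G \<Longrightarrow> d \<in> carrier G \<Longrightarrow>
  a \<otimes> inv b \<otimes> c \<otimes> inv d = (a \<otimes> inv d) \<otimes> inv (b \<otimes> inv c)"
  by (simp add: m_ac inv_mult)
lemma tel3: "a \<in> carrier G \<Longrightarrow> b \<in> carrier G \<Longrightarrow> (a \<otimes> inv b) \<otimes> b = a"
  by (simp add: m_assoc)
end

lemma nxt_in: assumes "finite S" "b \<in> S" "b < Max S"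
  shows "nxt S b \<in> S" "b < nxt S b" "\<And>s. s \<in> S \<Longrightarrow> b < s \<Longrightarrow> nxt S b \<le> s"
proof -
  have "S \<noteq> {}" using assms by auto
  then have ex: "\<exists>s\<in>S. b < s" using assms Max_in[of S] by blast
  have fin: "finite {s\<in>S. b < s}" "{s\<in>S. b < s} \<noteq> {}" using assms ex by auto
  have e: "nxt S b = Min {s\<in>S. b < s}" unfolding nxt_def using ex by simp
  show "nxt S b \<in> S" "b < nxt S b" using Min_in[OF fin] e by auto
  show "\<And>s. s \<in> S \<Longrightarrow> b < s \<Longrightarrow> nxt S b \<le> s" using Min_le[OF fin(1)] e by auto
qed

lemma nxt_max: assumes "finite S" "S \<noteq> {}" shows "nxt S (Max S) = Max S + 1"
proof -
  have "\<not> (\<exists>s\<in>S. Max S < s)" using assms by auto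
  then show ?thesis unfolding nxt_def by simp
qed

lemma prv_in: assumes "finite S" "a \<in> S" "Min S < a"
  shows "prv S a \<in> S" "prv S a < a" "\<And>s. s \<in> S \<Longrightarrow> s < a \<Longrightarrow> s \<le> prv S a"
proof -
  have "S \<noteq> {}" using assms by auto
  then have ex: "\<exists>s\<in>S. s < a" using assms Min_in[of S] by blast
  have fin: "finite {s\<in>S. s < a}" "{s\<in>S. s < a} \<noteq> {}" using assms ex by auto
  have e: "prv S a = Max {s\<in>S. s < a}" unfolding prv_def using ex by simp
  show "prv S a \<in> S" "prv S a < a" using Max_in[OF fin] e by auto
  show "\<And>s. s \<in> S \<Longrightarrow> s < a \<Longrightarrow> s \<le> prv S a" using Max_ge[OF fin(1)] e by auto
qed

lemma prv_min: assumes "finite S" "S \<noteq> {}" shows "prv S (Min S) = Min S - 1"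
proof -
  have "\<not> (\<exists>s\<in>S. s < Min S)" using assms by auto
  then show ?thesis unfolding prv_def by simp
qed

context comm_group begin

lemma tele_up:
  assumes fin: "finite S" and f: "\<And>x. f x \<in> carrier G"
  shows "finprod G (\<lambda>b. f b \<otimes> inv f (nxt S b)) {b\<in>S. y \<le> b} =
     (if {b\<in>S. y \<le> b} = {} then \<one> else f (Min {b\<in>S. y \<le> b}) \<otimes> inv f (Max S + 1))"
proof (induction "card {b\<in>S. y \<le> b}" arbitrary: y rule: less_induct)
  case less
  let ?B = "{b\<in>S. y \<le> b}"
  show ?case
  proof (cases "?B = {}")
    case True then show ?thesis by (simp only: True finprod_empty) simp
  next
    case False
    have finB: "finite ?B" using fin by simp
    define b1 where "b1 = Min ?B"
    have b1B: "b1 \<in> ?B" unfolding b1_def using Min_in[OF finB False] .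
    have b1le: "\<And>b. b \<in> ?B \<Longrightarrow> b1 \<le> b" unfolding b1_def using Min_le[OF finB] by blast
    have SnE: "S \<noteq> {}" using b1B by auto
    have b1M: "b1 \<le> Max S" using b1B fin by simp
    have split: "?B = insert b1 {b\<in>S. b1 < b}" using b1B b1le by force
    have notin: "b1 \<notin> {b\<in>S. b1 < b}" by simp
    have pi: "(\<lambda>b. f b \<otimes> inv f (nxt S b)) \<in> A \<rightarrow> carrier G" for A using f by auto
    have "finprod G (\<lambda>b. f b \<otimes> inv f (nxt S b)) ?B =
       (f b1 \<otimes> inv f (nxt S b1)) \<otimes> finprod G (\<lambda>b. f b \<otimes> inv f (nxt S b)) {b\<in>S. b1 < b}"
      using split finprod_insert[OF _ notin, of "\<lambda>b. f b \<otimes> inv f (nxt S b)"] fin pi f by simp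
    also have "\<dots> = f b1 \<otimes> inv f (Max S + 1)"
    proof (cases "b1 < Max S")
      case True
      note n = nxt_in[OF fin _ True]
      have eqB: "{b\<in>S. b1 < b} = {b\<in>S. nxt S b1 \<le> b}" using n b1B by force
      have lt: "card {b\<in>S. nxt S b1 \<le> b} < card ?B"
        using split eqB finB notin by (metis card_insert_disjoint finite_insert lessI)
      have ne: "{b\<in>S. nxt S b1 \<le> b} \<noteq> {}" using n b1B by auto
      have mn: "Min {b\<in>S. nxt S b1 \<le> b} = nxt S b1"
        using n b1B fin by (intro Min_eqI) auto
      have "finprod G (\<lambda>b. f b \<otimes> inv f (nxt S b)) {b\<in>S. b1 < b} = f (nxt S b1) \<otimes> inv f (Max S + 1)"
        using less.hyps[OF lt] unfolding if_not_P[OF ne] mn eqB by simp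
      then show ?thesis using tel2 f by simp
    next
      case False
      then have "b1 = Max S" using b1M by simp
      moreover have E: "{b\<in>S. b1 < b} = {}"
      proof -
        { fix b assume "b \<in> S" "b1 < b"
          then have False using Max_ge[OF fin, of b] False by linarith }
        then show ?thesis by auto
      qed
      ultimately show ?thesis using nxt_max[OF fin SnE] f by (simp only: E finprod_empty) simp
    qed
    finally show ?thesis unfolding if_not_P[OF False] b1_def .
  qed
qed

lemma tele_low:
  assumes fin: "finite S" and f: "\<And>x. f x \<in> carrier G"
  shows "finprod G (\<lambda>a. f a \<otimes> inv f (prv S a)) {a\<in>S. a \<le> x} =
     (if {a\<in>S. a \<le> x} = {} then \<one> else f (Max {a\<in>S. a \<le> x}) \<otimes> inv f (Min S - 1))"
proof (induction "card {a\<in>S. a \<le> x}" arbitrary: x rule: less_induct)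
  case less
  let ?A = "{a\<in>S. a \<le> x}"
  show ?case
  proof (cases "?A = {}")
    case True then show ?thesis by (simp only: True finprod_empty) simp
  next
    case False
    have finA: "finite ?A" using fin by simp
    define a1 where "a1 = Max ?A"
    have a1A: "a1 \<in> ?A" unfolding a1_def using Max_in[OF finA False] .
    have a1le: "\<And>a. a \<in> ?A \<Longrightarrow> a \<le> a1" unfolding a1_def using Max_ge[OF finA] by blast
    have SnE: "S \<noteq> {}" using a1A by auto
    have a1M: "Min S \<le> a1" using a1A fin by simp
    have split: "?A = insert a1 {a\<in>S. a < a1}" using a1A a1le by force
    have notin: "a1 \<notin> {a\<in>S. a < a1}" by simp
    have pi: "(\<lambda>a. f a \<otimes> inv f (prv S a)) \<in> A \<rightarrow> carrier G" for A using f by auto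
    have "finprod G (\<lambda>a. f a \<otimes> inv f (prv S a)) ?A =
       (f a1 \<otimes> inv f (prv S a1)) \<otimes> finprod G (\<lambda>a. f a \<otimes> inv f (prv S a)) {a\<in>S. a < a1}"
      using split finprod_insert[OF _ notin, of "\<lambda>a. f a \<otimes> inv f (prv S a)"] fin pi f by simp
    also have "\<dots> = f a1 \<otimes> inv f (Min S - 1)"
    proof (cases "Min S < a1")
      case True
      note n = prv_in[OF fin _ True]
      have eqA: "{a\<in>S. a < a1} = {a\<in>S. a \<le> prv S a1}" using n a1A by force
      have lt: "card {a\<in>S. a \<le> prv S a1} < card ?A"
        using split eqA finA notin by (metis card_insert_disjoint finite_insert lessI)
      have ne: "{a\<in>S. a \<le> prv S a1} \<noteq> {}" using n a1A by auto
      have mx: "Max {a\<in>S. a \<le> prv S a1} = prv S a1"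
        using n a1A fin by (intro Max_eqI) auto
      have "finprod G (\<lambda>a. f a \<otimes> inv f (prv S a)) {a\<in>S. a < a1} = f (prv S a1) \<otimes> inv f (Min S - 1)"
        using less.hyps[OF lt] unfolding if_not_P[OF ne] mx eqA by simp
      then show ?thesis using tel2 f by simp
    next
      case False
      then have "a1 = Min S" using a1M by simp
      moreover have E: "{a\<in>S. a < a1} = {}"
      proof -
        { fix b assume "b \<in> S" "b < a1"
          then have False using Min_le[OF fin, of b] False by linarith }
        then show ?thesis by auto
      qed
      ultimately show ?thesis using prv_min[OF fin SnE] f by (simp only: E finprod_empty) simp
    qed
    finally show ?thesis unfolding if_not_P[OF False] a1_def .
  qed
qed

end


context comm_monoid begin
lemma finprod_UN_disj:
  assumes "finite I" "\<And>i. i \<in> I \<Longrightarrow> finite (A i)"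
    "\<And>i j. i \<in> I \<Longrightarrow> j \<in> I \<Longrightarrow> i \<noteq> j \<Longrightarrow> A i \<inter> A j = {}"
    "\<And>x. f x \<in> carrier G"
  shows "finprod G f (\<Union>i\<in>I. A i) = finprod G (\<lambda>i. finprod G f (A i)) I"
  using assms
proof (induction I rule: finite_induct)
  case empty then show ?case by simp
next
  case (insert i I)
  have d: "A i \<inter> (\<Union>j\<in>I. A j) = {}" using insert.prems(2) insert.hyps by blast
  have "finprod G f (\<Union>j\<in>insert i I. A j) = finprod G f (A i \<union> (\<Union>j\<in>I. A j))" by simp
  also have "\<dots> = finprod G f (A i) \<otimes> finprod G f (\<Union>j\<in>I. A j)"
    by (rule finprod_Un_disjoint) (use insert d in auto)
  also have "finprod G f (\<Union>j\<in>I. A j) = finprod G (\<lambda>i. finprod G f (A i)) I"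
    by (rule insert.IH) (use insert in auto)
  finally show ?case using insert by (simp add: Pi_def)
qed
end

sublocale smcim \<subseteq> AC: comm_group "AC C" by (rule comm_group_AC)

declare FA.simps[simp del] dFA.simps[simp del]

context cpmod begin

abbreviation D where "D a b \<equiv> dFA C S F (IFin a b)"
abbreviation E where "E a \<equiv> dFA C S F (IInf a)"

lemma dFA_carrier[simp]: "dFA C S F I \<in> carrier (AC C)"
  by (cases I) (auto simp: dFA.simps)

lemma V_carrier[simp]: "V x y \<in> carrier (AC C)" by (simp add: V_def)

lemma FA_carrier[simp]: "FA C S F I \<in> carrier (AC C)"
  by (cases I) (auto simp: FA.simps)

lemma FA_fin: assumes "a \<in> S" "b \<in> S" "a < b"
  shows "FA C S F (IFin a b) = (D a b \<otimes>\<^bsub>AC C\<^esub> inv\<^bsub>AC C\<^esub> D (prv S a) b) \<otimes>\<^bsub>AC C\<^esub>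
     inv\<^bsub>AC C\<^esub> (D a (nxt S b) \<otimes>\<^bsub>AC C\<^esub> inv\<^bsub>AC C\<^esub> D (prv S a) (nxt S b))"
  using assms AC.tel4 by (simp add: FA.simps)

lemma FA_inf: "a \<in> S \<Longrightarrow> FA C S F (IInf a) = E a \<otimes>\<^bsub>AC C\<^esub> inv\<^bsub>AC C\<^esub> E (prv S a)"
  by (simp add: FA.simps)

lemma D_big: assumes "u \<le> Max S" shows "D u (Max S + 1) = E u"
proof -
  have "Max S + 1 \<notin> S" using Max_ge[OF finS, of "Max S + 1"] by linarith
  moreover have "Max (insert u S) = Max S" using finS neS assms by simp
  ultimately show ?thesis by (simp add: dFA.simps)
qed

lemma prv_le: assumes "a \<in> S" shows "prv S a \<le> a"
proof (cases "Min S < a")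
  case True then show ?thesis using prv_in[OF finS assms True] by simp
next
  case False
  then have "a = Min S" using Min_le[OF finS assms] by simp
  then show ?thesis using prv_min[OF finS neS] by simp
qed

definition row :: "real \<Rightarrow> real \<Rightarrow> intv set" where
  "row y a = (\<lambda>b. IFin a b) ` {b\<in>S. y \<le> b} \<union> {IInf a}"

definition gg :: "real \<Rightarrow> real \<Rightarrow> ('o \<times> 'o) set" where
  "gg y a = (if {b\<in>S. y \<le> b} = {} then E a else D a (Min {b\<in>S. y \<le> b}))"

lemma gg_carrier[simp]: "gg y a \<in> carrier (AC C)" unfolding gg_def by simp

lemma rowsum: assumes "a \<in> S" "a < y"
  shows "finprod (AC C) (FA C S F) (row y a) = gg y a \<otimes>\<^bsub>AC C\<^esub> inv\<^bsub>AC C\<^esub> gg y (prv S a)"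
proof -
  let ?B = "{b\<in>S. y \<le> b}"
  define h where "h b = D a b \<otimes>\<^bsub>AC C\<^esub> inv\<^bsub>AC C\<^esub> D (prv S a) b" for b
  have hc: "h b \<in> carrier (AC C)" for b unfolding h_def by simp
  have finB: "finite ?B" using finS by simp
  have notin: "IInf a \<notin> (\<lambda>b. IFin a b) ` ?B" by auto
  have "finprod (AC C) (FA C S F) (row y a) =
     FA C S F (IInf a) \<otimes>\<^bsub>AC C\<^esub> finprod (AC C) (FA C S F) ((\<lambda>b. IFin a b) ` ?B)"
    unfolding row_def using AC.finprod_insert[OF _ notin] finB by (simp add: Pi_def)
  also have "finprod (AC C) (FA C S F) ((\<lambda>b. IFin a b) ` ?B) = finprod (AC C) (\<lambda>b. FA C S F (IFin a b)) ?B"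
    by (rule AC.finprod_reindex) (auto simp: inj_on_def)
  also have "\<dots> = finprod (AC C) (\<lambda>b. h b \<otimes>\<^bsub>AC C\<^esub> inv\<^bsub>AC C\<^esub> h (nxt S b)) ?B"
    by (rule AC.finprod_cong') (use assms FA_fin hc in \<open>auto simp: h_def\<close>)
  also have "\<dots> = (if ?B = {} then \<one>\<^bsub>AC C\<^esub> else h (Min ?B) \<otimes>\<^bsub>AC C\<^esub> inv\<^bsub>AC C\<^esub> h (Max S + 1))"
    by (rule AC.tele_up[OF finS hc])
  finally have 1: "finprod (AC C) (FA C S F) (row y a) = FA C S F (IInf a) \<otimes>\<^bsub>AC C\<^esub>
     (if ?B = {} then \<one>\<^bsub>AC C\<^esub> else h (Min ?B) \<otimes>\<^bsub>AC C\<^esub> inv\<^bsub>AC C\<^esub> h (Max S + 1))" .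
  have aM: "a \<le> Max S" using assms finS by simp
  have paM: "prv S a \<le> Max S" using prv_le[OF assms(1)] aM by linarith
  have hM: "h (Max S + 1) = FA C S F (IInf a)"
    unfolding h_def using D_big[OF aM] D_big[OF paM] FA_inf[OF assms(1)] by simp
  show ?thesis
  proof (cases "?B = {}")
    case True
    then show ?thesis using 1 FA_inf[OF assms(1)] unfolding gg_def if_P[OF True] by simp
  next
    case False
    have "FA C S F (IInf a) \<otimes>\<^bsub>AC C\<^esub> (h (Min ?B) \<otimes>\<^bsub>AC C\<^esub> inv\<^bsub>AC C\<^esub> FA C S F (IInf a)) = h (Min ?B)"
      using AC.tel3[of "h (Min ?B)" "FA C S F (IInf a)"] hc
        AC.m_comm[of "FA C S F (IInf a)" "h (Min ?B) \<otimes>\<^bsub>AC C\<^esub> inv\<^bsub>AC C\<^esub> FA C S F (IInf a)"]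
      by simp
    then show ?thesis using 1 False hM unfolding gg_def h_def by (simp only: if_not_P[OF False]) simp
  qed
qed

lemma mob_Q: assumes "x < y"
  shows "finprod (AC C) (FA C S F) (\<Union>a\<in>{a\<in>S. a \<le> x}. row y a) =
    (if {a\<in>S. a \<le> x} = {} then \<one>\<^bsub>AC C\<^esub> else gg y (Max {a\<in>S. a \<le> x}) \<otimes>\<^bsub>AC C\<^esub> inv\<^bsub>AC C\<^esub> gg y (Min S - 1))"
proof -
  have "finprod (AC C) (FA C S F) (\<Union>a\<in>{a\<in>S. a \<le> x}. row y a) =
     finprod (AC C) (\<lambda>a. finprod (AC C) (FA C S F) (row y a)) {a\<in>S. a \<le> x}"
    by (rule AC.finprod_UN_disj) (use finS in \<open>auto simp: row_def\<close>)
  also have "\<dots> = finprod (AC C) (\<lambda>a. gg y a \<otimes>\<^bsub>AC C\<^esub> inv\<^bsub>AC C\<^esub> gg y (prv S a)) {a\<in>S. a \<le> x}"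
    by (rule AC.finprod_cong') (use rowsum assms in auto)
  also have "\<dots> = (if {a\<in>S. a \<le> x} = {} then \<one>\<^bsub>AC C\<^esub> else gg y (Max {a\<in>S. a \<le> x}) \<otimes>\<^bsub>AC C\<^esub> inv\<^bsub>AC C\<^esub> gg y (Min S - 1))"
    by (rule AC.tele_low[OF finS gg_carrier])
  finally show ?thesis .
qed

lemma cellpt: assumes "x < y"
  obtains u where "x \<le> u" "u < y" "\<forall>s\<in>S. \<not> (u < s \<and> s < y)"
proof -
  define u where "u = Max (insert x {s\<in>S. s < y})"
  have fin: "finite (insert x {s\<in>S. s < y})" using finS by simp
  have "x \<le> u" unfolding u_def by (rule Max_ge[OF fin]) simp
  moreover have "u < y" unfolding u_def using fin assms by (subst Max_less_iff) auto
  moreover have "\<forall>s\<in>S. \<not> (u < s \<and> s < y)"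
  proof (intro ballI notI)
    fix s assume "s \<in> S" "u < s \<and> s < y"
    then have "s \<le> u" unfolding u_def using Max_ge[OF fin, of s] by simp
    then show False using \<open>u < s \<and> s < y\<close> by simp
  qed
  ultimately show ?thesis using that by blast
qed

lemma gg_val: assumes "w \<le> x" "x < y" "nc S w x"
  shows "gg y w = dFA C S F (IFin x y)"
proof -
  obtain u where u: "x \<le> u" "u < y" "\<forall>s\<in>S. \<not> (u < s \<and> s < y)" using cellpt[OF assms(2)] by blast
  have d: "dFA C S F (IFin x y) = V x u" using dFA_fin[OF u] .
  have vv: "V w u = V x u" using V_cell[of w u x u] assms u by simp
  show ?thesis
  proof (cases "{b\<in>S. y \<le> b} = {}")
    case True
    then have "\<forall>s\<in>S. s \<le> u" using u by (metis (mono_tags, lifting) empty_iff mem_Collect_eq not_le)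
    then have "E w = V w u" using dFA_inf[of w u] assms u by simp
    then show ?thesis unfolding gg_def if_P[OF True] using d vv by simp
  next
    case False
    define b1 where "b1 = Min {b\<in>S. y \<le> b}"
    have fB: "finite {b\<in>S. y \<le> b}" using finS by simp
    have b1: "b1 \<in> S" "y \<le> b1" using Min_in[OF fB False] unfolding b1_def by auto
    have nb: "\<forall>s\<in>S. \<not> (u < s \<and> s < b1)"
    proof (intro ballI notI)
      fix s assume s: "s \<in> S" "u < s \<and> s < b1"
      show False
      proof (cases "y \<le> s")
        case True then have "b1 \<le> s" unfolding b1_def using Min_le[OF fB] s by simp
        then show False using s by simp
      next
        case False then show False using u s by auto
      qed
    qed
    have "D w b1 = V w u" using dFA_fin[of w u b1] nb assms u b1 by simp
    then show ?thesis unfolding gg_def if_not_P[OF False] b1_def[symmetric] using d vv by simp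
  qed
qed

definition valid_contains_set where
  "valid_contains_set I = {J. valid_intv J \<and> contains J I \<and> FA C S F J \<noteq> \<one>\<^bsub>AC C\<^esub>}"

lemma FA_fin_ne: "FA C S F (IFin a b) \<noteq> \<one>\<^bsub>AC C\<^esub> \<Longrightarrow> a \<in> S \<and> b \<in> S \<and> a < b"
  by (auto simp: FA.simps split: if_splits)

lemma FA_inf_ne: "FA C S F (IInf a) \<noteq> \<one>\<^bsub>AC C\<^esub> \<Longrightarrow> a \<in> S"
  by (auto simp: FA.simps split: if_splits)

lemma mob_fin: assumes "x < y"
  shows "up_sum C (FA C S F) (IFin x y) =
    dFA C S F (IFin x y) \<otimes>\<^bsub>AC C\<^esub> inv\<^bsub>AC C\<^esub> dFA C S F (IFin (min x (Min S - 1)) y)"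
proof -
  let ?J = "{J. valid_intv J \<and> contains J (IFin x y) \<and> FA C S F J \<noteq> \<one>\<^bsub>AC C\<^esub>}"
  let ?Q = "\<Union>a\<in>{a\<in>S. a \<le> x}. row y a"
  have finQ: "finite ?Q" using finS by (auto simp: row_def)
  have sub: "?J \<subseteq> ?Q"
  proof
    fix J assume J: "J \<in> ?J"
    show "J \<in> ?Q"
    proof (cases J)
      case (IFin a b)
      then show ?thesis using J FA_fin_ne[of a b] by (auto simp: row_def)
    next
      case (IInf a)
      then show ?thesis using J FA_inf_ne[of a] by (auto simp: row_def)
    qed
  qed
  have rest: "FA C S F J = \<one>\<^bsub>AC C\<^esub>" if "J \<in> ?Q - ?J" for J
    using that assms by (auto simp: row_def)
  have "up_sum C (FA C S F) (IFin x y) = finprod (AC C) (FA C S F) ?Q"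
    unfolding up_sum_def
    by (rule AC.finprod_mono_neutral_cong_left[OF finQ sub rest]) auto
  also have "\<dots> = (if {a\<in>S. a \<le> x} = {} then \<one>\<^bsub>AC C\<^esub> else gg y (Max {a\<in>S. a \<le> x}) \<otimes>\<^bsub>AC C\<^esub> inv\<^bsub>AC C\<^esub> gg y (Min S - 1))"
    by (rule mob_Q[OF assms])
  also have "\<dots> = dFA C S F (IFin x y) \<otimes>\<^bsub>AC C\<^esub> inv\<^bsub>AC C\<^esub> dFA C S F (IFin (min x (Min S - 1)) y)"
  proof (cases "{a\<in>S. a \<le> x} = {}")
    case True
    have xm: "x < Min S" using True Min_in[OF finS neS] by force
    have z: "min x (Min S - 1) \<le> x" by simp
    have ncz: "nc S (min x (Min S - 1)) x" unfolding nc_def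
    proof (intro ballI notI)
      fix s assume s: "s \<in> S" "min (min x (Min S - 1)) x < s \<and> s \<le> max (min x (Min S - 1)) x"
      then have "s \<le> x" by (auto simp: max_def min_def split: if_splits)
      then show False using xm Min_le[OF finS s(1)] by linarith
    qed
    have "gg y (min x (Min S - 1)) = dFA C S F (IFin x y)" by (rule gg_val[OF z assms ncz])
    moreover have "gg y (min x (Min S - 1)) = dFA C S F (IFin (min x (Min S - 1)) y)"
      by (rule gg_val) (use assms in auto)
    ultimately show ?thesis unfolding if_P[OF True] by simp
  next
    case False
    define ak where "ak = Max {a\<in>S. a \<le> x}"
    have fA: "finite {a\<in>S. a \<le> x}" using finS by simp
    have ak: "ak \<in> S" "ak \<le> x" using Max_in[OF fA False] unfolding ak_def by auto
    have xm: "Min S \<le> x" using ak Min_le[OF finS] by force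
    have nck: "nc S ak x" unfolding nc_def
    proof (intro ballI notI)
      fix s assume s: "s \<in> S" "min ak x < s \<and> s \<le> max ak x"
      then have "s \<le> x" using ak by (simp add: min_def max_def)
      then have "s \<le> ak" unfolding ak_def using Max_ge[OF fA, of s] s(1) by simp
      then show False using s ak by (simp add: min_def max_def)
    qed
    have "gg y ak = dFA C S F (IFin x y)" by (rule gg_val[OF ak(2) assms nck])
    moreover have "gg y (Min S - 1) = dFA C S F (IFin (Min S - 1) y)"
      by (rule gg_val) (use assms xm in auto)
    moreover have "min x (Min S - 1) = Min S - 1" using xm by simp
    ultimately show ?thesis unfolding if_not_P[OF False] ak_def[symmetric] by simp
  qed
  finally show ?thesis .
qed

lemma mob_inf:
  shows "up_sum C (FA C S F) (IInf x) =
    dFA C S F (IInf x) \<otimes>\<^bsub>AC C\<^esub> inv\<^bsub>AC C\<^esub> dFA C S F (IInf (min x (Min S - 1)))"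
proof -
  let ?J = "{J. valid_intv J \<and> contains J (IInf x) \<and> FA C S F J \<noteq> \<one>\<^bsub>AC C\<^esub>}"
  let ?A = "{a\<in>S. a \<le> x}"
  have fA: "finite ?A" using finS by simp
  have sub: "?J \<subseteq> IInf ` ?A"
  proof
    fix J assume J: "J \<in> ?J"
    show "J \<in> IInf ` ?A"
    proof (cases J)
      case (IFin a b)
      then show ?thesis using J by simp
    next
      case (IInf a)
      then show ?thesis using J FA_inf_ne[of a] by auto
    qed
  qed
  have rest: "FA C S F J = \<one>\<^bsub>AC C\<^esub>" if "J \<in> IInf ` ?A - ?J" for J
    using that by auto
  have "up_sum C (FA C S F) (IInf x) = finprod (AC C) (FA C S F) (IInf ` ?A)"
    unfolding up_sum_def
    by (rule AC.finprod_mono_neutral_cong_left[OF _ sub rest]) (use fA in auto)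
  also have "\<dots> = finprod (AC C) (\<lambda>a. FA C S F (IInf a)) ?A"
    by (rule AC.finprod_reindex) (auto simp: inj_on_def)
  also have "\<dots> = finprod (AC C) (\<lambda>a. E a \<otimes>\<^bsub>AC C\<^esub> inv\<^bsub>AC C\<^esub> E (prv S a)) ?A"
    by (rule AC.finprod_cong') (auto simp: FA_inf)
  also have "\<dots> = (if ?A = {} then \<one>\<^bsub>AC C\<^esub> else E (Max ?A) \<otimes>\<^bsub>AC C\<^esub> inv\<^bsub>AC C\<^esub> E (Min S - 1))"
    by (rule AC.tele_low[OF finS dFA_carrier])
  also have "\<dots> = dFA C S F (IInf x) \<otimes>\<^bsub>AC C\<^esub> inv\<^bsub>AC C\<^esub> dFA C S F (IInf (min x (Min S - 1)))"
  proof -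
    define u where "u = max x (Max S)"
    have us: "\<forall>s\<in>S. s \<le> u" unfolding u_def using Max_ge[OF finS] by force
    have Ex: "E x = V x u" using dFA_inf[of x u] us unfolding u_def by simp
    show ?thesis
    proof (cases "?A = {}")
      case True
      have xm: "x < Min S" using True Min_in[OF finS neS] by force
      have ncz: "nc S (min x (Min S - 1)) x" unfolding nc_def
    proof (intro ballI notI)
      fix s assume s: "s \<in> S" "min (min x (Min S - 1)) x < s \<and> s \<le> max (min x (Min S - 1)) x"
      then have "s \<le> x" by (auto simp: max_def min_def split: if_splits)
      then show False using xm Min_le[OF finS s(1)] by linarith
    qed
      have "E (min x (Min S - 1)) = V (min x (Min S - 1)) u" using dFA_inf[of "min x (Min S - 1)" u] us
        unfolding u_def by simp
      also have "\<dots> = V x u" using V_cell[of "min x (Min S - 1)" u x u] ncz unfolding u_def by simp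
      finally show ?thesis unfolding if_P[OF True] using Ex by simp
    next
      case False
      define ak where "ak = Max ?A"
      have ak: "ak \<in> S" "ak \<le> x" using Max_in[OF fA False] unfolding ak_def by auto
      have xm: "Min S \<le> x" using ak Min_le[OF finS] by force
      have nck: "nc S ak x" unfolding nc_def
      proof (intro ballI notI)
        fix s assume s: "s \<in> S" "min ak x < s \<and> s \<le> max ak x"
        then have "s \<le> x" using ak by (simp add: min_def max_def)
      then have "s \<le> ak" unfolding ak_def using Max_ge[OF fA, of s] s(1) by simp
        then show False using s ak by (simp add: min_def max_def)
      qed
      have "E ak = V ak u" using dFA_inf[of ak u] us ak unfolding u_def by simp
      also have "\<dots> = V x u" using V_cell[of ak u x u] nck ak unfolding u_def by simp
      finally have 1: "E ak = E x" using Ex by simp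
      have 2: "min x (Min S - 1) = Min S - 1" using xm by simp
      show ?thesis unfolding if_not_P[OF False] ak_def[symmetric] 1 2 ..
    qed
  qed
  finally show ?thesis .
qed

end


lemma small_gap_right: fixes T :: "real set" assumes "finite T" "b > 0"
  shows "\<exists>\<tau>>0. \<tau> \<le> b \<and> (\<forall>s\<in>T. \<not> (t < s \<and> s \<le> t + \<tau>))"
proof -
  let ?D = "(\<lambda>s. s - t) ` {s\<in>T. t < s}"
  have fD: "finite ?D" using assms by simp
  show ?thesis
  proof (cases "?D = {}")
    case True
    then show ?thesis using assms by (intro exI[of _ b]) auto
  next
    case False
    have pos: "Min ?D > 0" using Min_in[OF fD False] by auto
    define tt where "tt = min b (Min ?D / 2)"
    have "\<forall>s\<in>T. \<not> (t < s \<and> s \<le> t + tt)"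
    proof (intro ballI notI)
      fix s assume s: "s \<in> T" "t < s \<and> s \<le> t + tt"
      then have "s - t \<in> ?D" by auto
      then have "Min ?D \<le> s - t" using Min_le[OF fD] by blast
      then show False using s pos unfolding tt_def by linarith
    qed
    then show ?thesis using pos assms by (intro exI[of _ tt]) (auto simp: tt_def)
  qed
qed

lemma small_gap_left: fixes T :: "real set" assumes "finite T" "b > 0"
  shows "\<exists>\<tau>>0. \<tau> \<le> b \<and> (\<forall>s\<in>T. \<not> (t - \<tau> \<le> s \<and> s < t))"
proof -
  have "finite (uminus ` T)" using assms by simp
  from small_gap_right[OF this assms(2), of "-t"] obtain \<tau> where
    "\<tau> > 0" "\<tau> \<le> b" "\<forall>s\<in>uminus ` T. \<not> (- t < s \<and> s \<le> - t + \<tau>)" by blast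
  then show ?thesis by (intro exI[of _ \<tau>]) force
qed

locale twomod = F: cpmod C S F + G: cpmod C S' G
  for C :: "('o,'m) smcat" and S F S' G
begin

lemma interleave_V:
  assumes il: "interleaved C e F G" and e0: "0 \<le> e" and pq: "p + 4 * e \<le> q"
    and nc1: "nc S p (p + 2 * e)" and nc2: "nc S (q - 2 * e) q"
  shows "F.V p q = G.V (p + e) (q - e)"
proof -
  obtain \<phi> \<psi> where nt1: "nat_trans C F (shiftP e G) \<phi>" and nt2: "nat_trans C G (shiftP e F) \<psi>"
    and c1: "\<And>r. ccomp C (\<psi> (r + e)) (\<phi> r) = F r (r + 2 * e)"
    and c2: "\<And>r. ccomp C (\<phi> (r + e)) (\<psi> r) = G r (r + 2 * e)"
    using il unfolding interleaved_def by blast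
  have pG: "pobj C (shiftP e G) r = pobj C G (r + e)" for r unfolding pobj_def shiftP_def by simp
  have pF: "pobj C (shiftP e F) r = pobj C F (r + e)" for r unfolding pobj_def shiftP_def by simp
  have phi_t: "cdom C (\<phi> r) = pobj C F r" "ccod C (\<phi> r) = pobj C G (r + e)" for r
    using nt1 pG unfolding nat_trans_def by auto
  have psi_t: "cdom C (\<psi> r) = pobj C G r" "ccod C (\<psi> r) = pobj C F (r + e)" for r
    using nt2 pF unfolding nat_trans_def by auto
  have phi_n: "ccomp C (G (a + e) (b + e)) (\<phi> a) = ccomp C (\<phi> b) (F a b)" if "a \<le> b" for a b
    using nt1 that unfolding nat_trans_def shiftP_def by auto
  have psi_n: "ccomp C (F (a + e) (b + e)) (\<psi> a) = ccomp C (\<psi> b) (G a b)" if "a \<le> b" for a b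
    using nt2 that unfolding nat_trans_def shiftP_def by auto
  define \<alpha> where "\<alpha> = F (p + 2*e) (q - 2*e)"
  define \<beta> where "\<beta> = G (p + e) (q - e)"
  define a1 where "a1 = F p (p + 2*e)"
  define a2 where "a2 = F (q - 2*e) q"
  define \<psi>1 where "\<psi>1 = \<psi> (p + e)"
  define \<phi>1 where "\<phi>1 = \<phi> p"
  define \<phi>2 where "\<phi>2 = \<phi> (q - 2*e)"
  define \<psi>2 where "\<psi>2 = \<psi> (q - e)"
  have r1: "p + e + e = p + 2*e" "q - 2*e + e = q - e" "q - e + e = q" "q - 2 * e + 2 * e = q"
    "p + 2 * e + e = p + 3 * e" "q - 2 * e + e = q - e" by simp_all
  have le: "p \<le> p + 2*e" "p + 2*e \<le> q - 2*e" "q - 2*e \<le> q" "p + e \<le> q - e" "p + e \<le> p + 3*e"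
    "p + 3*e \<le> q - e" "p \<le> q - 2*e" "p \<le> q" using e0 pq by linarith+
  have ty: "cdom C a1 = pobj C F p" "ccod C a1 = pobj C F (p + 2*e)"
    "cdom C \<alpha> = pobj C F (p + 2*e)" "ccod C \<alpha> = pobj C F (q - 2*e)"
    "cdom C a2 = pobj C F (q - 2*e)" "ccod C a2 = pobj C F q"
    "cdom C \<psi>1 = pobj C G (p + e)" "ccod C \<psi>1 = pobj C F (p + 2*e)"
    "cdom C \<phi>1 = pobj C F p" "ccod C \<phi>1 = pobj C G (p + e)"
    "cdom C \<phi>2 = pobj C F (q - 2*e)" "ccod C \<phi>2 = pobj C G (q - e)"
    "cdom C \<psi>2 = pobj C G (q - e)" "ccod C \<psi>2 = pobj C F q"
    unfolding a1_def \<alpha>_def a2_def \<psi>1_def \<phi>1_def \<phi>2_def \<psi>2_def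
    using le phi_t psi_t by (simp_all add: algebra_simps)
  have isos: "is_iso C a1" "is_iso C a2" unfolding a1_def a2_def
    using F.F_iso le nc1 nc2 by auto
  have e1: "ccomp C \<psi>1 \<phi>1 = a1" unfolding \<psi>1_def \<phi>1_def a1_def using c1[of p] by simp
  have e2: "ccomp C \<psi>2 \<phi>2 = a2" unfolding \<psi>2_def \<phi>2_def a2_def using c1[of "q - 2*e"] r1 by simp
  have e3: "ccomp C \<phi>2 (ccomp C \<alpha> \<psi>1) = \<beta>"
  proof -
    have "ccomp C \<phi>2 (ccomp C \<alpha> \<psi>1) = ccomp C (ccomp C \<phi>2 \<alpha>) \<psi>1"
      using F.assoc[of \<psi>1 \<alpha> \<phi>2] ty by simp
    also have "ccomp C \<phi>2 \<alpha> = ccomp C (G (p + 3*e) (q - e)) (\<phi> (p + 2*e))"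
      unfolding \<phi>2_def \<alpha>_def using phi_n[OF le(2)] r1 by simp
    also have "ccomp C (ccomp C (G (p + 3*e) (q - e)) (\<phi> (p + 2*e))) \<psi>1 =
        ccomp C (G (p + 3*e) (q - e)) (ccomp C (\<phi> (p + 2*e)) \<psi>1)"
      using F.assoc[of \<psi>1 "\<phi> (p + 2*e)" "G (p + 3*e) (q - e)"] ty phi_t le r1 by simp
    also have "ccomp C (\<phi> (p + 2*e)) \<psi>1 = G (p + e) (p + 3*e)"
      unfolding \<psi>1_def using c2[of "p + e"] r1 by (simp add: algebra_simps)
    also have "ccomp C (G (p + 3*e) (q - e)) (G (p + e) (p + 3*e)) = \<beta>"
      unfolding \<beta>_def using G.F_comp le by simp
    finally show ?thesis .
  qed
  have e4: "ccomp C \<psi>2 (ccomp C \<beta> \<phi>1) = ccomp C a2 (ccomp C \<alpha> a1)"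
  proof -
    have "ccomp C \<beta> \<phi>1 = ccomp C (\<phi> (q - 2*e)) (F p (q - 2*e))"
      unfolding \<beta>_def \<phi>1_def using phi_n[OF le(7)] r1 by simp
    then have "ccomp C \<psi>2 (ccomp C \<beta> \<phi>1) = ccomp C (ccomp C \<psi>2 \<phi>2) (F p (q - 2*e))"
      using F.assoc[of "F p (q - 2*e)" "\<phi> (q - 2*e)" \<psi>2] ty le unfolding \<phi>2_def by simp
    also have "\<dots> = F p q" using e2 F.F_comp le unfolding a2_def by simp
    also have "\<dots> = ccomp C a2 (ccomp C \<alpha> a1)"
      unfolding a2_def \<alpha>_def a1_def using F.F_comp le by simp
    finally show ?thesis .
  qed
  have io: "iso_obj C (im_obj C \<alpha>) (im_obj C \<beta>)"
    by (rule F.sandwich[OF ty(1,2,3,4,5,6,7,8,9,10,11,12,13,14) isos e1 e2 e3 e4])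
  have "F p q = ccomp C a2 (ccomp C \<alpha> a1)"
    unfolding a2_def \<alpha>_def a1_def using F.F_comp le by simp
  then have "iso_obj C (im_obj C (F p q)) (im_obj C \<alpha>)"
    using F.iso_obj_trans[OF F.im_post_iso[OF isos(2)] F.im_pre_iso[OF isos(1)]] ty by simp
  then show ?thesis unfolding F.V_def G.V_def using io F.iso_obj_trans F.cls_iso \<beta>_def by metis
qed

lemma transfer_fin:
  assumes e0: "0 \<le> \<epsilon>" and approx: "\<And>\<delta>. \<delta> > 0 \<Longrightarrow> \<exists>e. \<epsilon> \<le> e \<and> e < \<epsilon> + \<delta> \<and> interleaved C e F G"
    and xy: "c \<le> y - x" and c: "4 * \<epsilon> < c"
    and nl: "\<forall>s\<in>S. \<not> (x < s \<and> s < x + c)" and nr: "\<forall>s\<in>S. \<not> (y - c \<le> s \<and> s < y)"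
  shows "dFA C S F (IFin x y) = dFA C S' G (IFin (x + \<epsilon>) (y - \<epsilon>))"
proof -
  define \<eta> where "\<eta> = c - 4 * \<epsilon>"
  have \<eta>: "\<eta> > 0" using c unfolding \<eta>_def by simp
  obtain t1 where t1: "t1 > 0" "t1 \<le> \<eta> / 8" "\<forall>s\<in>S'. \<not> (x + \<epsilon> < s \<and> s \<le> x + \<epsilon> + t1)"
    using small_gap_right[OF G.finS, of "\<eta> / 8" "x + \<epsilon>"] \<eta> by auto
  obtain t2 where t2: "t2 > 0" "t2 \<le> \<eta> / 8" "\<forall>s\<in>S'. \<not> (y - \<epsilon> - t2 \<le> s \<and> s < y - \<epsilon>)"
    using small_gap_left[OF G.finS, of "\<eta> / 8" "y - \<epsilon>"] \<eta> by auto
  define t where "t = min t1 t2"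
  have t: "t > 0" "t \<le> \<eta> / 8" "t \<le> t1" "t \<le> t2" using t1 t2 unfolding t_def by auto
  have t8: "8 * t \<le> c - 4 * \<epsilon>" using t(2) unfolding \<eta>_def by simp
  obtain e where e: "\<epsilon> \<le> e" "e < \<epsilon> + t" "interleaved C e F G"
    using approx[of t] t by auto
  define q where "q = y - \<epsilon> - t + e"
  have a1: "x + 4 * e \<le> q" using e t xy e0 c t8 unfolding q_def by linarith
  have a2: "nc S x (x + 2 * e)" unfolding nc_def
  proof (intro ballI notI)
    fix s assume s: "s \<in> S" "min x (x + 2 * e) < s \<and> s \<le> max x (x + 2 * e)"
    have "x < s" "s < x + c" using s e t e0 c using t8 by (auto simp: min_def max_def split: if_splits)
    then show False using nl s(1) by blast
  qed
  have a3: "nc S (q - 2 * e) q" unfolding nc_def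
  proof (intro ballI notI)
    fix s assume s: "s \<in> S" "min (q - 2 * e) q < s \<and> s \<le> max (q - 2 * e) q"
    have "y - c \<le> s" "s < y" using s e t e0 c using t8 unfolding q_def by (auto simp: min_def max_def split: if_splits)
    then show False using nr s(1) by blast
  qed
  have 1: "F.V x q = G.V (x + e) (q - e)"
    by (rule interleave_V[OF e(3) _ a1 a2 a3]) (use e e0 in linarith)
  have 2: "dFA C S F (IFin x y) = F.V x q"
  proof (rule F.dFA_fin)
    show "x \<le> q" using a1 e e0 by linarith
    show "q < y" using e unfolding q_def by linarith
    show "\<forall>s\<in>S. \<not> (q < s \<and> s < y)"
    proof (intro ballI notI)
      fix s assume s: "s \<in> S" "q < s \<and> s < y"
      then have "y - c \<le> s" using e t8 e0 c unfolding q_def by linarith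
      then show False using nr s by blast
    qed
  qed
  have 3: "dFA C S' G (IFin (x + \<epsilon>) (y - \<epsilon>)) = G.V (x + \<epsilon>) (q - e)"
  proof (rule G.dFA_fin)
    show "x + \<epsilon> \<le> q - e" using e t xy e0 c t8 unfolding q_def by linarith
    show "q - e < y - \<epsilon>" using t unfolding q_def by linarith
    show "\<forall>s\<in>S'. \<not> (q - e < s \<and> s < y - \<epsilon>)"
      using t2 t unfolding q_def by force
  qed
  have 4: "G.V (x + \<epsilon>) (q - e) = G.V (x + e) (q - e)"
  proof (rule G.V_cell)
    show "x + \<epsilon> \<le> q - e" using e t xy e0 c t8 unfolding q_def by linarith
    show "x + e \<le> q - e" using e t xy e0 c t8 unfolding q_def by linarith
    show "nc S' (x + \<epsilon>) (x + e)" unfolding nc_def using t1 t e by (force simp: min_def max_def)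
    show "nc S' (q - e) (q - e)" by simp
  qed
  show ?thesis using 1 2 3 4 by simp
qed

lemma transfer_inf:
  assumes e0: "0 \<le> \<epsilon>" and approx: "\<And>\<delta>. \<delta> > 0 \<Longrightarrow> \<exists>e. \<epsilon> \<le> e \<and> e < \<epsilon> + \<delta> \<and> interleaved C e F G"
    and c: "4 * \<epsilon> < c"
    and nl: "\<forall>s\<in>S. \<not> (x < s \<and> s < x + c)"
  shows "dFA C S F (IInf x) = dFA C S' G (IInf (x + \<epsilon>))"
proof -
  define \<eta> where "\<eta> = c - 4 * \<epsilon>"
  have \<eta>: "\<eta> > 0" using c unfolding \<eta>_def by simp
  obtain t where t: "t > 0" "t \<le> \<eta> / 8" "\<forall>s\<in>S'. \<not> (x + \<epsilon> < s \<and> s \<le> x + \<epsilon> + t)"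
    using small_gap_right[OF G.finS, of "\<eta> / 8" "x + \<epsilon>"] \<eta> by auto
  have t8: "8 * t \<le> c - 4 * \<epsilon>" using t(2) unfolding \<eta>_def by simp
  obtain e where e: "\<epsilon> \<le> e" "e < \<epsilon> + t" "interleaved C e F G"
    using approx[of t] t by auto
  define q where "q = max (x + 4 * e) (max (Max S + 2 * e) (Max S' + e)) + 1"
  have a1: "x + 4 * e \<le> q" unfolding q_def by simp
  have a2: "nc S x (x + 2 * e)" unfolding nc_def
  proof (intro ballI notI)
    fix s assume s: "s \<in> S" "min x (x + 2 * e) < s \<and> s \<le> max x (x + 2 * e)"
    have "x < s" "s < x + c" using s e t e0 c using t8 by (auto simp: min_def max_def split: if_splits)
    then show False using nl s(1) by blast
  qed
  have SM: "s \<le> Max S" if "s \<in> S" for s using Max_ge[OF F.finS that] .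
  have SM': "s \<le> Max S'" if "s \<in> S'" for s using Max_ge[OF G.finS that] .
  have qS: "Max S + 2 * e < q" unfolding q_def by simp
  have qS': "Max S' + e < q" unfolding q_def by simp
  have a3: "nc S (q - 2 * e) q" unfolding nc_def
  proof (intro ballI notI)
    fix s assume s: "s \<in> S" "min (q - 2 * e) q < s \<and> s \<le> max (q - 2 * e) q"
    have "q - 2 * e < s" using s e e0 by (auto simp: min_def max_def split: if_splits)
    then show False using SM[OF s(1)] qS by linarith
  qed
  have 1: "F.V x q = G.V (x + e) (q - e)"
    by (rule interleave_V[OF e(3) _ a1 a2 a3]) (use e e0 in linarith)
  have 2: "dFA C S F (IInf x) = F.V x q"
    by (rule F.dFA_inf) (use a1 e e0 SM qS in \<open>force+\<close>)
  have 3: "dFA C S' G (IInf (x + \<epsilon>)) = G.V (x + \<epsilon>) (q - e)"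
    by (rule G.dFA_inf) (use a1 e e0 SM' qS' in \<open>force+\<close>)
  have 4: "G.V (x + \<epsilon>) (q - e) = G.V (x + e) (q - e)"
  proof (rule G.V_cell)
    show "x + \<epsilon> \<le> q - e" using a1 e e0 by linarith
    show "x + e \<le> q - e" using a1 e e0 by linarith
    show "nc S' (x + \<epsilon>) (x + e)" unfolding nc_def using t e by (force simp: min_def max_def)
    show "nc S' (q - e) (q - e)" by simp
  qed
  show ?thesis using 1 2 3 4 by simp
qed

end


lemma contains_grow[simp]: "contains (grow \<epsilon> J) (grow \<epsilon> I) = contains J I"
  by (cases J; cases I) auto

lemma grow_inj: "grow \<epsilon> J = grow \<epsilon> K \<Longrightarrow> J = K"
  by (cases J; cases K) auto

context cpmod begin

lemma nc_below: assumes "x < Min S" "x' < Min S" shows "nc S x x'"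
  unfolding nc_def
proof (intro ballI notI)
  fix s assume s: "s \<in> S" "min x x' < s \<and> s \<le> max x x'"
  then have "s < Min S" using assms by (auto simp: max_def split: if_splits)
  then show False using Min_le[OF finS s(1)] by linarith
qed

lemma up_sum_nabla:
  assumes e0: "0 \<le> \<epsilon>" and gap: "\<forall>s\<in>S. \<forall>t\<in>S. s < t \<longrightarrow> 2 * \<epsilon> < t - s"
  shows "up_sum C (nabla \<epsilon> (FA C S F)) I = up_sum C (FA C S F) (grow \<epsilon> I)"
proof -
  let ?P = "{J. valid_intv J \<and> contains J I \<and> nabla \<epsilon> (FA C S F) J \<noteq> \<one>\<^bsub>AC C\<^esub>}"
  let ?Q = "{K. valid_intv K \<and> contains K (grow \<epsilon> I) \<and> FA C S F K \<noteq> \<one>\<^bsub>AC C\<^esub>}"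
  have vg: "valid_intv J \<Longrightarrow> valid_intv (grow \<epsilon> J)" for J using e0 by (cases J) auto
  have "?Q = grow \<epsilon> ` ?P"
  proof
    show "grow \<epsilon> ` ?P \<subseteq> ?Q" using vg by (auto simp: nabla_def)
  next
    show "?Q \<subseteq> grow \<epsilon> ` ?P"
    proof
      fix K assume K: "K \<in> ?Q"
      show "K \<in> grow \<epsilon> ` ?P"
      proof (cases K)
        case (IFin a b)
        then have ab: "a \<in> S" "b \<in> S" "a < b" using FA_fin_ne K by auto
        then have "2 * \<epsilon> < b - a" using gap by blast
        then have "valid_intv (IFin (a + \<epsilon>) (b - \<epsilon>))" by simp
        moreover have "grow \<epsilon> (IFin (a + \<epsilon>) (b - \<epsilon>)) = K" using IFin by simp
        ultimately show ?thesis using K unfolding nabla_def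
          by (metis (mono_tags, lifting) comp_apply contains_grow image_eqI mem_Collect_eq)
      next
        case (IInf a)
        have "grow \<epsilon> (IInf (a + \<epsilon>)) = K" using IInf by simp
        then show ?thesis using K unfolding nabla_def
          by (metis (mono_tags, lifting) comp_apply contains_grow image_eqI mem_Collect_eq valid_intv.simps(2))
      qed
    qed
  qed
  moreover have "inj_on (grow \<epsilon>) ?P" using grow_inj by (auto simp: inj_on_def)
  ultimately have "finprod (AC C) (FA C S F) ?Q = finprod (AC C) (\<lambda>J. FA C S F (grow \<epsilon> J)) ?P"
    using AC.finprod_reindex[of "FA C S F" "grow \<epsilon>" ?P] by (simp add: Pi_def)
  then show ?thesis unfolding up_sum_def nabla_def by (simp add: comp_def)
qed

lemma low_fin: assumes "x < Min S" "x' < Min S" "x < y" "x' < y"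
  shows "dFA C S F (IFin x y) = dFA C S F (IFin x' y)"
proof -
  obtain u where u: "max x x' \<le> u" "u < y" "\<forall>s\<in>S. \<not> (u < s \<and> s < y)"
    using cellpt[of "max x x'" y] assms by auto
  have nc: "nc S x x'" using nc_below assms by simp
  have "dFA C S F (IFin x y) = V x u" using dFA_fin[of x u y] u by simp
  also have "\<dots> = V x' u" using V_cell[of x u x' u] nc u by simp
  also have "\<dots> = dFA C S F (IFin x' y)" using dFA_fin[of x' u y] u by simp
  finally show ?thesis .
qed

lemma low_inf: assumes "x < Min S" "x' < Min S"
  shows "dFA C S F (IInf x) = dFA C S F (IInf x')"
proof -
  define u where "u = max (max x x') (Max S)"
  have us: "\<forall>s\<in>S. s \<le> u" unfolding u_def using Max_ge[OF finS] by force
  have nc: "nc S x x'" using nc_below assms by simp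
  have "dFA C S F (IInf x) = V x u" using dFA_inf[of x u] us unfolding u_def by simp
  also have "\<dots> = V x' u" using V_cell[of x u x' u] nc unfolding u_def by simp
  also have "\<dots> = dFA C S F (IInf x')" using dFA_inf[of x' u] us unfolding u_def by simp
  finally show ?thesis .
qed

lemma is_pdgm_FA: "is_pdgm C (FA C S F)"
  unfolding is_pdgm_def
proof (intro conjI allI impI)
  show "\<exists>T. finite T \<and> (\<forall>I. valid_intv I \<longrightarrow> FA C S F I \<noteq> \<one>\<^bsub>AC C\<^esub> \<longrightarrow>
        (case I of IFin q r \<Rightarrow> q \<in> T \<and> r \<in> T | IInf q \<Rightarrow> q \<in> T))"
  proof (rule exI[of _ S], intro conjI allI impI)
    show "finite S" by (rule finS)
    fix I assume ne: "FA C S F I \<noteq> \<one>\<^bsub>AC C\<^esub>"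
    show "case I of IFin q r \<Rightarrow> q \<in> S \<and> r \<in> S | IInf q \<Rightarrow> q \<in> S"
    proof (cases I)
      case (IFin q r) then show ?thesis using FA_fin_ne[of q r] ne by simp
    next
      case (IInf q) then show ?thesis using FA_inf_ne[of q] ne by simp
    qed
  qed
next
  fix I show "FA C S F I \<in> carrier (AC C)" by (rule FA_carrier)
qed

lemma is_pdgm_nabla: assumes "0 \<le> \<epsilon>" shows "is_pdgm C (nabla \<epsilon> (FA C S F))"
  unfolding is_pdgm_def
proof (intro conjI allI impI)
  show "\<exists>T. finite T \<and> (\<forall>I. valid_intv I \<longrightarrow> nabla \<epsilon> (FA C S F) I \<noteq> \<one>\<^bsub>AC C\<^esub> \<longrightarrow>
        (case I of IFin q r \<Rightarrow> q \<in> T \<and> r \<in> T | IInf q \<Rightarrow> q \<in> T))"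
  proof (intro exI conjI allI impI)
    show "finite ((\<lambda>s. s + \<epsilon>) ` S \<union> (\<lambda>s. s - \<epsilon>) ` S)" using finS by simp
    fix I assume "valid_intv I" "nabla \<epsilon> (FA C S F) I \<noteq> \<one>\<^bsub>AC C\<^esub>"
    then show "case I of IFin q r \<Rightarrow> q \<in> (\<lambda>s. s + \<epsilon>) ` S \<union> (\<lambda>s. s - \<epsilon>) ` S \<and> r \<in> (\<lambda>s. s + \<epsilon>) ` S \<union> (\<lambda>s. s - \<epsilon>) ` S
       | IInf q \<Rightarrow> q \<in> (\<lambda>s. s + \<epsilon>) ` S \<union> (\<lambda>s. s - \<epsilon>) ` S"
    proof (cases I)
      case (IFin q r)
      then have "q - \<epsilon> \<in> S" "r + \<epsilon> \<in> S" using FA_fin_ne \<open>nabla \<epsilon> (FA C S F) I \<noteq> _\<close>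
        unfolding nabla_def by auto
      then have "q \<in> (\<lambda>s. s + \<epsilon>) ` S" "r \<in> (\<lambda>s. s - \<epsilon>) ` S"
        using image_eqI[of q "\<lambda>s. s + \<epsilon>" "q - \<epsilon>" S] image_eqI[of r "\<lambda>s. s - \<epsilon>" "r + \<epsilon>" S] by simp_all
      then show ?thesis using IFin by auto
    next
      case (IInf q)
      then have "q - \<epsilon> \<in> S" using FA_inf_ne \<open>nabla \<epsilon> (FA C S F) I \<noteq> _\<close>
        unfolding nabla_def by auto
      then have "q \<in> (\<lambda>s. s + \<epsilon>) ` S" using image_eqI[of q "\<lambda>s. s + \<epsilon>" "q - \<epsilon>" S] by simp
      then show ?thesis using IInf by auto
    qed
  qed
qed (simp add: nabla_def)

end

context twomod begin

lemma hom_eq: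
  assumes e0: "0 \<le> \<epsilon>" and approx: "\<And>\<delta>. \<delta> > 0 \<Longrightarrow> \<exists>e. \<epsilon> \<le> e \<and> e < \<epsilon> + \<delta> \<and> interleaved C e F G"
    and c: "4 * \<epsilon> < c" and gapc: "\<forall>s\<in>S. \<forall>t\<in>S. s < t \<longrightarrow> c < t - s"
    and I: "valid_intv I" and ne: "nabla \<epsilon> (FA C S F) I \<noteq> \<one>\<^bsub>AC C\<^esub>"
  shows "up_sum C (nabla \<epsilon> (FA C S F)) I = up_sum C (FA C S' G) I"
proof -
  have gap2: "\<forall>s\<in>S. \<forall>t\<in>S. s < t \<longrightarrow> 2 * \<epsilon> < t - s" using gapc c e0 by force
  have nl: "\<forall>s\<in>S. \<not> (a < s \<and> s < a + c)" if "a \<in> S" for a using gapc that by force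
  have nr: "\<forall>s\<in>S. \<not> (b - c \<le> s \<and> s < b)" if "b \<in> S" for b using gapc that by force
  have mS: "Min S \<le> a" if "a \<in> S" for a using Min_le[OF F.finS that] .
  define w where "w = min (Min S - c) (Min S' - \<epsilon> - 1)"
  have w1: "w + c \<le> Min S" "w + \<epsilon> < Min S'" "w < Min S" using c e0 unfolding w_def by auto
  have nlw: "\<forall>s\<in>S. \<not> (w < s \<and> s < w + c)" using w1 Min_le[OF F.finS] by force
  have "up_sum C (nabla \<epsilon> (FA C S F)) I = up_sum C (FA C S F) (grow \<epsilon> I)"
    by (rule F.up_sum_nabla[OF e0 gap2])
  also have "\<dots> = up_sum C (FA C S' G) I"
  proof (cases I)
    case (IFin q r)
    define a where "a = q - \<epsilon>"
    define b where "b = r + \<epsilon>"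
    have gI: "grow \<epsilon> I = IFin a b" using IFin unfolding a_def b_def by simp
    have ab: "a \<in> S" "b \<in> S" "a < b" using F.FA_fin_ne ne gI unfolding nabla_def by auto
    have cab: "c \<le> b - a" using gapc ab by force
    have qr: "q = a + \<epsilon>" "r = b - \<epsilon>" unfolding a_def b_def by simp_all
    have 1: "dFA C S F (IFin a b) = dFA C S' G (IFin q r)"
      unfolding qr by (rule transfer_fin[OF e0 approx cab c nl[OF ab(1)] nr[OF ab(2)]])
    have cwb: "c \<le> b - w" using w1 mS[OF ab(1)] ab by linarith
    have 2: "dFA C S F (IFin w b) = dFA C S' G (IFin (w + \<epsilon>) r)"
      unfolding qr by (rule transfer_fin[OF e0 approx cwb c nlw nr[OF ab(2)]])
    have am: "min a (Min S - 1) = Min S - 1" using mS[OF ab(1)] by simp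
    have 3: "dFA C S F (IFin (Min S - 1) b) = dFA C S F (IFin w b)"
      by (rule F.low_fin) (use w1 mS[OF ab(1)] ab in auto)
    have 4: "dFA C S' G (IFin (w + \<epsilon>) r) = dFA C S' G (IFin (min q (Min S' - 1)) r)"
    proof (rule G.low_fin)
      show "w + \<epsilon> < Min S'" by (rule w1(2))
      show "min q (Min S' - 1) < Min S'" by simp
      show "w + \<epsilon> < r" using w1 mS[OF ab(1)] ab c e0 cwb qr by linarith
      show "min q (Min S' - 1) < r" using I IFin by simp
    qed
    have "up_sum C (FA C S F) (grow \<epsilon> I) = dFA C S F (IFin a b) \<otimes>\<^bsub>AC C\<^esub> inv\<^bsub>AC C\<^esub> dFA C S F (IFin (min a (Min S - 1)) b)"
      unfolding gI by (rule F.mob_fin[OF ab(3)])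
    also have "\<dots> = dFA C S' G (IFin q r) \<otimes>\<^bsub>AC C\<^esub> inv\<^bsub>AC C\<^esub> dFA C S' G (IFin (min q (Min S' - 1)) r)"
      unfolding am 1 3 2 4 ..
    also have "\<dots> = up_sum C (FA C S' G) I"
      unfolding IFin by (rule G.mob_fin[symmetric]) (use I IFin in simp)
    finally show ?thesis .
  next
    case (IInf q)
    define a where "a = q - \<epsilon>"
    have gI: "grow \<epsilon> I = IInf a" using IInf unfolding a_def by simp
    have aS: "a \<in> S" using F.FA_inf_ne ne gI unfolding nabla_def by auto
    have qa: "q = a + \<epsilon>" unfolding a_def by simp
    have 1: "dFA C S F (IInf a) = dFA C S' G (IInf q)"
      unfolding qa by (rule transfer_inf[OF e0 approx c nl[OF aS]])
    have 2: "dFA C S F (IInf w) = dFA C S' G (IInf (w + \<epsilon>))"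
      by (rule transfer_inf[OF e0 approx c nlw])
    have am: "min a (Min S - 1) = Min S - 1" using mS[OF aS] by simp
    have 3: "dFA C S F (IInf (Min S - 1)) = dFA C S F (IInf w)"
      by (rule F.low_inf) (use w1 in auto)
    have 4: "dFA C S' G (IInf (w + \<epsilon>)) = dFA C S' G (IInf (min q (Min S' - 1)))"
      by (rule G.low_inf) (use w1 in auto)
    have "up_sum C (FA C S F) (grow \<epsilon> I) = dFA C S F (IInf a) \<otimes>\<^bsub>AC C\<^esub> inv\<^bsub>AC C\<^esub> dFA C S F (IInf (min a (Min S - 1)))"
      unfolding gI by (rule F.mob_inf)
    also have "\<dots> = dFA C S' G (IInf q) \<otimes>\<^bsub>AC C\<^esub> inv\<^bsub>AC C\<^esub> dFA C S' G (IInf (min q (Min S' - 1)))"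
      unfolding am 1 3 2 4 ..
    also have "\<dots> = up_sum C (FA C S' G) I"
      unfolding IInf by (rule G.mob_inf[symmetric])
    finally show ?thesis .
  qed
  finally show ?thesis .
qed

end


theorem theorem8p1:
  fixes C :: "('o, 'm) smcat"
    and Uo :: "'o \<Rightarrow> 'x set" and Um :: "'m \<Rightarrow> 'x \<Rightarrow> 'x"
    and F G :: "real \<Rightarrow> real \<Rightarrow> 'm" and S :: "real set" and \<epsilon> :: real
  assumes "is_smc C" and "has_images C" and "concrete_images C Uo Um"
    and "constructible C S F"
    and "in_Pmod C G"
    and "dI C F G = ereal \<epsilon>"
    and "\<forall>s\<in>S. \<forall>t\<in>S. s < t \<longrightarrow> \<epsilon> < (t - s) / 4"
  shows "\<forall>S'. constructible C S' G \<longrightarrow>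
           is_pdgm C (nabla \<epsilon> (FA C S F)) \<and> is_pdgm C (FA C S' G) \<and>
           pdgm_hom C (nabla \<epsilon> (FA C S F)) (FA C S' G)"
proof (intro allI impI)
  fix S' assume consG: "constructible C S' G"
  interpret T: twomod C S F S' G
    by unfold_locales (use assms consG in auto)
  let ?X = "{ereal e | e. e \<ge> 0 \<and> interleaved C e F G}"
  have infX: "Inf ?X = ereal \<epsilon>" using assms(6) unfolding dI_def .
  have e0: "0 \<le> \<epsilon>"
  proof -
    have "ereal 0 \<le> Inf ?X" by (rule Inf_greatest) auto
    then show ?thesis using infX by simp
  qed
  have approx: "\<exists>e. \<epsilon> \<le> e \<and> e < \<epsilon> + \<delta> \<and> interleaved C e F G" if "\<delta> > 0" for \<delta>
  proof -
    have "Inf ?X < ereal (\<epsilon> + \<delta>)" using infX that by simp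
    then obtain x where x: "x \<in> ?X" "x < ereal (\<epsilon> + \<delta>)" using Inf_less_iff by blast
    then obtain e where e: "x = ereal e" "e \<ge> 0" "interleaved C e F G" by auto
    have "Inf ?X \<le> x" using x(1) by (rule Inf_lower)
    then have "\<epsilon> \<le> e" using infX e by simp
    then show ?thesis using e x by auto
  qed
  define D where "D = (\<lambda>(s, t). t - s) ` {(s, t). s \<in> S \<and> t \<in> S \<and> s < t}"
  have finD: "finite D"
  proof -
    have "{(s, t). s \<in> S \<and> t \<in> S \<and> s < t} \<subseteq> S \<times> S" by auto
    then have "finite {(s, t). s \<in> S \<and> t \<in> S \<and> s < t}"
      by (rule finite_subset[OF _ finite_cartesian_product[OF T.F.finS T.F.finS]])
    then show ?thesis unfolding D_def by simp
  qed
  have Dgt: "4 * \<epsilon> < d" if dD: "d \<in> D" for d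
  proof -
    from dD obtain p where p: "p \<in> {(s, t). s \<in> S \<and> t \<in> S \<and> s < t}" "d = snd p - fst p"
      unfolding D_def by (auto simp: case_prod_beta)
    have "\<epsilon> < (snd p - fst p) / 4" using assms(7) p(1) by auto
    then show ?thesis using p(2) by simp
  qed
  have Dmem: "t - s \<in> D" if "s \<in> S" "t \<in> S" "s < t" for s t using that unfolding D_def by force
  define c where "c = (if D = {} then 4 * \<epsilon> + 1 else (Min D + 4 * \<epsilon>) / 2)"
  have c: "4 * \<epsilon> < c"
  proof (cases "D = {}")
    case True then show ?thesis unfolding c_def by simp
  next
    case False
    have "4 * \<epsilon> < Min D" using Dgt Min_in[OF finD False] by blast
    then show ?thesis unfolding c_def using False by simp
  qed
  have gapc: "\<forall>s\<in>S. \<forall>t\<in>S. s < t \<longrightarrow> c < t - s"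
  proof (intro ballI impI)
    fix s t assume st: "s \<in> S" "t \<in> S" "s < t"
    then have d: "t - s \<in> D" by (rule Dmem)
    then have ne: "D \<noteq> {}" by auto
    have "Min D \<le> t - s" using Min_le[OF finD d] .
    moreover have "4 * \<epsilon> < Min D" using Dgt Min_in[OF finD ne] by blast
    ultimately show "c < t - s" unfolding c_def using ne by simp
  qed
  show "is_pdgm C (nabla \<epsilon> (FA C S F)) \<and> is_pdgm C (FA C S' G) \<and>
           pdgm_hom C (nabla \<epsilon> (FA C S F)) (FA C S' G)"
  proof (intro conjI)
    show "is_pdgm C (nabla \<epsilon> (FA C S F))" by (rule T.F.is_pdgm_nabla[OF e0])
    show "is_pdgm C (FA C S' G)" by (rule T.G.is_pdgm_FA)
    show "pdgm_hom C (nabla \<epsilon> (FA C S F)) (FA C S' G)"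
      unfolding pdgm_hom_def
    proof (intro allI impI)
      fix I assume I: "valid_intv I" and ne: "nabla \<epsilon> (FA C S F) I \<noteq> \<one>\<^bsub>AC C\<^esub>"
      have eq: "up_sum C (nabla \<epsilon> (FA C S F)) I = up_sum C (FA C S' G) I"
        by (rule T.hom_eq[OF e0 approx c gapc I ne])
      have car: "up_sum C (FA C S' G) I \<in> carrier (AC C)"
        unfolding up_sum_def by (rule T.F.AC.finprod_closed) (simp add: Pi_def)
      have "up_sum C (FA C S' G) I \<otimes>\<^bsub>AC C\<^esub> inv\<^bsub>AC C\<^esub> up_sum C (FA C S' G) I = cls C (cunit C)"
        using T.F.AC.r_inv[OF car] T.F.cls_unit by simp
      then show "Ale C (up_sum C (nabla \<epsilon> (FA C S F)) I) (up_sum C (FA C S' G) I)"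
        unfolding Ale_def eq by blast
    qed
  qed
qed



end
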